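(* Let $d=1$, $s\in\mathbb{R}$, $q\in[2,\infty]$, $r\in[2,\infty]$, and set $\gamma(q,r)=\frac12-\frac1r$. Then for every $T\in(0,\infty]$, with $I=[0,T)$, \[ \big\|\mathcal{D}_1(t)\chi_{>1}(\nabla)f\big\|_{L^q_t\dot B^s_{r,2}(I)}\lesssim\big\||\nabla|^{\gamma(q,r)-1}\chi_{>1}(\nabla)f\big\|_{\dot B^s_{2,2}}, \] \[ \big\|\partial_t\mathcal{D}_1(t)\chi_{>1}(\nabla)f\big\|_{L^q_t\dot B^s_{r,2}(I)}\lesssim\big\||\nabla|^{\gamma(q,r)}\chi_{>1}(\nabla)f\big\|_{\dot B^s_{2,2}}, \] with implicit constants independent of $T$ and $f$.
   Context: Let $\chi_{\le1}\in C_0^\infty(\mathbb{R})$ be even with $\chi_{\le1}(\xi)=1$ for $|\xi|\le1$ and $0$ for $|\xi|\ge2$; set $\chi_{\le a}(\xi)=\chi_{\le1}(\xi/a)$, $\chi_{>1}=1-\chi_{\le1}$, and for $j\in\mathbb{Z}$ let $P_j$ be the Fourier multiplier with symbol $\chi_{\le2^j}(\xi)-\chi_{\le2^{j-1}}(\xi)$. The homogeneous Besov norm is $\|g\|_{\dot B^s_{r,2}}=\big(\sum_{j\in\mathbb{Z}}(2^{js}\|P_jg\|_{L^r})^2\big)^{1/2}$, and $\|u\|_{L^q_t\dot B^s_{r,2}(I)}=\big\|\|u(t)\|_{\dot B^s_{r,2}}\big\|_{L^q_t(I)}$. $|\nabla|^a$ is the multiplier with symbol $|\xi|^a$. $\mathcal{D}_1(t)$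 is the Fourier multiplier with symbol $e^{-t/2}\frac{2}{\sqrt{1-4\xi^2}}\sinh\big(t\frac{\sqrt{1-4\xi^2}}{2}\big)$ for $|\xi|\le\frac12$ and $e^{-t/2}\frac{2}{\sqrt{4\xi^2-1}}\sin\big(t\frac{\sqrt{4\xi^2-1}}{2}\big)$ for $|\xi|>\frac12$ (the solution operator $g\mapsto\phi$ of $\partial_t^2\phi-\partial_x^2\phi+\partial_t\phi=0$, $\phi(0)=0$, $\partial_t\phi(0)=g$), and $\partial_t\mathcal{D}_1(t)$ is the multiplier with the $t$-derivative of this symbol. *)

theory Defs
  imports "HOL-Analysis.Analysis"
begin

text \<open>Convention: the derivative corresponds to multiplication by i xi, i.e.
  hat f(xi) = int f(x) e^{-i x xi} dx.  Fourier multipliers are realised through the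
  inverse Fourier integral.\<close>

definition fourier :: "(real \<Rightarrow> complex) \<Rightarrow> real \<Rightarrow> complex" where
  "fourier f \<xi> = (\<integral>x. f x * exp (- (\<i> * complex_of_real (x * \<xi>))) \<partial>lborel)"

definition mult_app :: "(real \<Rightarrow> real) \<Rightarrow> (real \<Rightarrow> complex) \<Rightarrow> real \<Rightarrow> complex" where
  "mult_app m f x = (1 / (2 * pi)) *
     (\<integral>\<xi>. complex_of_real (m \<xi>) * fourier f \<xi> * exp (\<i> * complex_of_real (x * \<xi>)) \<partial>lborel)"

definition chi_le :: "(real \<Rightarrow> real) \<Rightarrow> real \<Rightarrow> real \<Rightarrow> real" where
  "chi_le chi a \<xi> = chi (\<xi> / a)"

definition chi_gt1 :: "(real \<Rightarrow> real) \<Rightarrow> real \<Rightarrow> real" where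
  "chi_gt1 chi \<xi> = 1 - chi \<xi>"

definition psi :: "(real \<Rightarrow> real) \<Rightarrow> int \<Rightarrow> real \<Rightarrow> real" where
  "psi chi j \<xi> = chi_le chi (2 powr real_of_int j) \<xi> - chi_le chi (2 powr real_of_int (j - 1)) \<xi>"

definition D1sym :: "real \<Rightarrow> real \<Rightarrow> real" where
  "D1sym t \<xi> =
     (if \<bar>\<xi>\<bar> \<le> 1/2
      then exp (- t / 2) * (2 / sqrt (1 - 4 * \<xi>\<^sup>2)) * sinh (t * sqrt (1 - 4 * \<xi>\<^sup>2) / 2)
      else exp (- t / 2) * (2 / sqrt (4 * \<xi>\<^sup>2 - 1)) * sin (t * sqrt (4 * \<xi>\<^sup>2 - 1) / 2))"

definition dtD1sym :: "real \<Rightarrow> real \<Rightarrow> real" where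
  "dtD1sym t \<xi> = deriv (\<lambda>\<tau>. D1sym \<tau> \<xi>) t"

definition enn_powr :: "ennreal \<Rightarrow> real \<Rightarrow> ennreal" where
  "enn_powr x p = (if x = \<infinity> then \<infinity> else ennreal (enn2real x powr p))"

definition Lpn :: "'a measure \<Rightarrow> ereal \<Rightarrow> ('a \<Rightarrow> ennreal) \<Rightarrow> ennreal" where
  "Lpn M p F =
     (if p = \<infinity> then Inf {c. AE x in M. F x \<le> c}
      else enn_powr (\<integral>\<^sup>+ x. enn_powr (F x) (real_of_ereal p) \<partial>M) (1 / real_of_ereal p))"

text \<open>Homogeneous Besov norm of m(D) f in dot B^s_{r,2}.\<close>
definition besov :: "(real \<Rightarrow> real) \<Rightarrow> real \<Rightarrow> ereal \<Rightarrow> (real \<Rightarrow> real) \<Rightarrow> (real \<Rightarrow> complex) \<Rightarrow> ennreal" where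
  "besov chi s r m f =
     enn_powr (\<integral>\<^sup>+ j. (ennreal (2 powr (real_of_int j * s)) *
                         Lpn lborel r (\<lambda>x. ennreal (norm (mult_app (\<lambda>\<xi>. psi chi j \<xi> * m \<xi>) f x))))\<^sup>2
                 \<partial>count_space (UNIV :: int set)) (1/2)"

text \<open>Norm in L^q_t dot B^s_{r,2}(I), I = [0,T), of t \<mapsto> M(t,D) f.\<close>
definition LqB :: "(real \<Rightarrow> real) \<Rightarrow> ereal \<Rightarrow> ereal \<Rightarrow> real \<Rightarrow> ereal \<Rightarrow>
                   (real \<Rightarrow> real \<Rightarrow> real) \<Rightarrow> (real \<Rightarrow> complex) \<Rightarrow> ennreal" where
  "LqB chi T q s r M f =
     Lpn (restrict_space lborel {t. 0 \<le> t \<and> ereal t < T}) q (\<lambda>t. besov chi s r (M t) f)"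

definition gamma_qr :: "ereal \<Rightarrow> ereal \<Rightarrow> real" where
  "gamma_qr q r = 1/2 - (if r = \<infinity> then 0 else 1 / real_of_ereal r)"

end

theory Submission
  imports Defs "HOL-Probability.Probability"
begin
lemma std_char_lborel:
  "(\<integral>y. complex_of_real (exp (- y\<^sup>2 / 2)) * exp (\<i> * complex_of_real (y * v)) \<partial>lborel)
     = complex_of_real (sqrt (2*pi) * exp (- v\<^sup>2 / 2))"
proof -
  have c1: "char std_normal_distribution v = complex_of_real (exp (- v\<^sup>2 / 2))"
    by (simp add: char_std_normal_distribution)
  have c2: "char std_normal_distribution v =
      (\<integral>y. std_normal_density y *\<^sub>R exp (\<i> * complex_of_real (v * y)) \<partial>lborel)"
    unfolding char_def by (subst integral_density) auto
  have 1: "(\<integral>y. std_normal_density y *\<^sub>R exp (\<i> * complex_of_real (y * v)) \<partial>lborel)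
      = complex_of_real (exp (- v\<^sup>2 / 2))"
  proof -
    have e: "(\<lambda>y. std_normal_density y *\<^sub>R exp (\<i> * complex_of_real (y * v))) = (\<lambda>y. std_normal_density y *\<^sub>R exp (\<i> * complex_of_real (v * y)))"
      by (simp add: mult.commute)
    show ?thesis unfolding e using c1 c2 by metis
  qed
  have "(\<integral>y. complex_of_real (exp (- y\<^sup>2 / 2)) * exp (\<i> * complex_of_real (y * v)) \<partial>lborel)
     = (\<integral>y. complex_of_real (sqrt (2*pi)) * (std_normal_density y *\<^sub>R exp (\<i> * complex_of_real (y * v))) \<partial>lborel)"
    by (rule Bochner_Integration.integral_cong) (auto simp: std_normal_density_def scaleR_conv_of_real)
  also have "\<dots> = complex_of_real (sqrt (2*pi)) * complex_of_real (exp (- v\<^sup>2 / 2))"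
    unfolding integral_mult_right_zero 1 ..
  finally show ?thesis by simp
qed

lemma gauss_ft:
  assumes d: "0 < (d::real)"
  shows "(\<integral>x. complex_of_real (exp (- (d*x)\<^sup>2 / 2)) * exp (\<i> * complex_of_real (x * u)) \<partial>lborel)
     = complex_of_real (2*pi * normal_density 0 d u)"
proof -
  have "(\<integral>x. complex_of_real (exp (- (d*x)\<^sup>2 / 2)) * exp (\<i> * complex_of_real (x * u)) \<partial>lborel)
      = \<bar>1/d\<bar> *\<^sub>R (\<integral>y. complex_of_real (exp (- (d*(0 + (1/d)*y))\<^sup>2 / 2)) * exp (\<i> * complex_of_real ((0 + (1/d)*y) * u)) \<partial>lborel)"
    using d by (subst lborel_integral_real_affine[where c="1/d" and t=0]) auto
  also have "\<dots> = (1/d) *\<^sub>R (\<integral>y. complex_of_real (exp (- y\<^sup>2 / 2)) * exp (\<i> * complex_of_real (y * (u/d))) \<partial>lborel)"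
    using d by (simp add: field_simps)
  also have "\<dots> = (1/d) *\<^sub>R complex_of_real (sqrt (2*pi) * exp (- (u/d)\<^sup>2 / 2))"
    by (simp only: std_char_lborel)
  also have "\<dots> = complex_of_real (2*pi * normal_density 0 d u)"
  proof -
    have "sqrt (2*pi*d\<^sup>2) = sqrt (2*pi) * d" using d by (simp add: real_sqrt_mult)
    moreover have "sqrt (2*pi) * sqrt (2*pi) = 2*pi" by simp
    ultimately have "(1/d) * (sqrt (2*pi) * exp (- (u/d)\<^sup>2 / 2)) = 2*pi * normal_density 0 d u"
      using d unfolding normal_density_def
      by (simp add: field_simps power2_eq_square)
    then show ?thesis by (metis of_real_eq_iff scaleR_conv_of_real of_real_mult)
  qed
  finally show ?thesis .
qed

lemma meas_l2: "f \<in> borel_measurable (borel \<Otimes>\<^sub>M borel) \<Longrightarrow> f \<in> borel_measurable (lborel \<Otimes>\<^sub>M lborel)"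
  by (subst measurable_cong_sets[OF sets_pair_measure_cong[OF sets_lborel sets_lborel] refl])

lemma cnj_measurable[measurable (raw)]: "f \<in> borel_measurable M \<Longrightarrow> (\<lambda>x. cnj (f x)) \<in> borel_measurable M"
  by (rule borel_measurable_continuous_on[where f=cnj]) (auto intro: continuous_intros)

definition eix :: "real \<Rightarrow> real \<Rightarrow> complex" where
  "eix x \<xi> = exp (\<i> * complex_of_real (x * \<xi>))"

lemma eix_measurable[measurable]: "(\<lambda>(x,\<xi>). eix x \<xi>) \<in> borel_measurable (borel \<Otimes>\<^sub>M borel)"
  unfolding eix_def by measurable

lemma eix_measurable2[measurable]: "eix x \<in> borel_measurable borel"
  unfolding eix_def by measurable

lemma norm_eix[simp]: "norm (eix x \<xi>) = 1"
  unfolding eix_def by (simp add: norm_exp_i_times)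

lemma cnj_eix: "cnj (eix x \<xi>) = eix x (- \<xi>)"
  unfolding eix_def by (simp add: exp_cnj)

lemma eix_mult: "eix x u * eix x v = eix x (u + v)"
  unfolding eix_def by (simp add: exp_add[symmetric] algebra_simps)

lemma int_aE:
  assumes "integrable lborel (a :: real \<Rightarrow> complex)"
  shows "integrable lborel (\<lambda>\<xi>. a \<xi> * eix x \<xi>)"
proof (rule Bochner_Integration.integrable_bound[OF integrable_norm[OF assms]])
  have [measurable]: "a \<in> borel_measurable lborel" using assms by (rule borel_measurable_integrable)
  show "(\<lambda>\<xi>. a \<xi> * eix x \<xi>) \<in> borel_measurable lborel" by measurable
  show "AE \<xi> in lborel. norm (a \<xi> * eix x \<xi>) \<le> norm (norm (a \<xi>))" by (simp add: norm_mult)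
qed

lemma g_bound:
  assumes "integrable lborel (a :: real \<Rightarrow> complex)"
  shows "norm (\<integral>\<xi>. a \<xi> * eix x \<xi> \<partial>lborel) \<le> (\<integral>\<xi>. norm (a \<xi>) \<partial>lborel)"
proof -
  have "norm (\<integral>\<xi>. a \<xi> * eix x \<xi> \<partial>lborel) \<le> (\<integral>\<xi>. norm (a \<xi> * eix x \<xi>) \<partial>lborel)"
    by (rule integral_norm_bound)
  also have "\<dots> = (\<integral>\<xi>. norm (a \<xi>) \<partial>lborel)" by (simp add: norm_mult)
  finally show ?thesis .
qed

lemma g_meas[measurable]:
  assumes [measurable]: "a \<in> borel_measurable lborel"
  shows "(\<lambda>x. \<integral>\<xi>. (a \<xi> :: complex) * eix x \<xi> \<partial>lborel) \<in> borel_measurable lborel"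
  by measurable

definition wg :: "real \<Rightarrow> real \<Rightarrow> real" where
  "wg d x = exp (- (d*x)\<^sup>2 / 2)"

lemma wg_measurable[measurable]: "wg d \<in> borel_measurable lborel"
  unfolding wg_def by measurable

lemma wg_pos: "0 < wg d x" unfolding wg_def by simp

lemma wg_le1: "wg d x \<le> 1" unfolding wg_def by simp

lemma wg_normal: "0 < d \<Longrightarrow> wg d x = (sqrt (2*pi) / d) * normal_density 0 (1/d) x"
proof -
  assume d: "0 < d"
  have "sqrt (2 * pi * (1/d)\<^sup>2) = sqrt (2*pi) / d" using d by (simp add: real_sqrt_mult real_sqrt_divide)
  then show ?thesis using d unfolding wg_def normal_density_def
    by (simp add: field_simps power2_eq_square)
qed

lemma wg_int: "0 < d \<Longrightarrow> integrable lborel (wg d)"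
proof -
  assume d: "0 < d"
  have "wg d = (\<lambda>x. (sqrt (2*pi) / d) * normal_density 0 (1/d) x)" using wg_normal[OF d] by auto
  then show ?thesis using d by (simp only:) (auto intro!: integrable_mult_right integrable_normal_density)
qed

lemma gauss_ft': "0 < d \<Longrightarrow> (\<integral>x. complex_of_real (wg d x) * eix x u \<partial>lborel) = complex_of_real (2*pi * normal_density 0 d u)"
  unfolding wg_def eix_def by (rule gauss_ft)

lemma step1:
  fixes a :: "real \<Rightarrow> complex"
  assumes aint: "integrable lborel a" and d: "0 < d"
  shows "(\<integral>x. complex_of_real (wg d x) * (cnj (\<integral>\<xi>. a \<xi> * eix x \<xi> \<partial>lborel) * (\<integral>\<xi>. a \<xi> * eix x \<xi> \<partial>lborel)) \<partial>lborel)
       = (\<integral>\<xi>. a \<xi> * cnj (\<integral>\<eta>. a \<eta> * complex_of_real (2*pi*normal_density 0 d (\<eta> - \<xi>)) \<partial>lborel) \<partial>lborel)"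
proof -
  define g where "g x = (\<integral>\<xi>. a \<xi> * eix x \<xi> \<partial>lborel)" for x
  have am[measurable]: "a \<in> borel_measurable borel" using aint borel_measurable_integrable by simp
  have gm[measurable]: "g \<in> borel_measurable borel" unfolding g_def[abs_def] using g_meas[of a] by simp
  define A1 where "A1 = (\<integral>\<xi>. norm (a \<xi>) \<partial>lborel)"
  have gb: "norm (g x) \<le> A1" for x unfolding g_def A1_def by (rule g_bound[OF aint])
  have wint: "integrable lborel (wg d)" using d by (rule wg_int)
  have wgA: "integrable lborel (\<lambda>x. wg d x * A1)" using wint by (rule integrable_mult_left)
  have int_wg: "integrable lborel (\<lambda>x. wg d x * norm (g x))"
  proof (rule Bochner_Integration.integrable_bound[OF wgA])
    show "(\<lambda>x. wg d x * norm (g x)) \<in> borel_measurable lborel" by measurable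
    show "AE x in lborel. norm (wg d x * norm (g x)) \<le> norm (wg d x * A1)"
    proof (intro AE_I2)
      fix x
      have A1pos: "0 \<le> A1" using gb[of 0] norm_ge_zero order_trans by blast
      have "wg d x * norm (g x) \<le> wg d x * A1" using wg_pos[of d x] gb[of x] by (simp add: mult_left_mono)
      then show "norm (wg d x * norm (g x)) \<le> norm (wg d x * A1)"
        using wg_pos[of d x] A1pos by (simp add: abs_mult)
    qed
  qed
  define F1 where "F1 x \<xi> = complex_of_real (wg d x) * cnj (g x) * (a \<xi> * eix x \<xi>)" for x \<xi>
  have I1: "integrable (lborel \<Otimes>\<^sub>M lborel) (\<lambda>(x,\<xi>). F1 x \<xi>)"
  proof (rule lborel_pair.Fubini_integrable)
    show "(\<lambda>(x,\<xi>). F1 x \<xi>) \<in> borel_measurable (lborel \<Otimes>\<^sub>M lborel)" unfolding F1_def by (intro meas_l2) measurable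
    have "(\<lambda>x. \<integral>\<xi>. norm (case (x, \<xi>) of (x, \<xi>) \<Rightarrow> F1 x \<xi>) \<partial>lborel) = (\<lambda>x. wg d x * norm (g x) * A1)"
      using wg_pos[of d] by (simp add: F1_def norm_mult A1_def abs_of_pos)
    then show "integrable lborel (\<lambda>x. \<integral>\<xi>. norm (case (x, \<xi>) of (x, \<xi>) \<Rightarrow> F1 x \<xi>) \<partial>lborel)"
      using int_wg by (simp add: integrable_mult_left)
    show "AE x in lborel. integrable lborel (\<lambda>\<xi>. case (x, \<xi>) of (x, \<xi>) \<Rightarrow> F1 x \<xi>)"
      unfolding F1_def by (auto intro!: integrable_mult_right int_aE aint)
  qed
  have R: "(\<integral>x. \<integral>\<xi>. F1 x \<xi> \<partial>lborel \<partial>lborel) = (\<integral>x. complex_of_real (wg d x) * (cnj (g x) * g x) \<partial>lborel)"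
    unfolding F1_def integral_mult_right_zero g_def by (simp add: mult.assoc)
  define h where "h \<xi> = (\<integral>\<eta>. a \<eta> * complex_of_real (2*pi*normal_density 0 d (\<eta> - \<xi>)) \<partial>lborel)" for \<xi>
  have J: "(\<integral>x. F1 x \<xi> \<partial>lborel) = a \<xi> * cnj (h \<xi>)" for \<xi>
  proof -
    define F2 where "F2 x \<eta> = complex_of_real (wg d x) * (a \<eta> * eix x (\<eta> - \<xi>))" for x \<eta>
    have I2: "integrable (lborel \<Otimes>\<^sub>M lborel) (\<lambda>(x,\<eta>). F2 x \<eta>)"
    proof (rule lborel_pair.Fubini_integrable)
      show "(\<lambda>(x,\<eta>). F2 x \<eta>) \<in> borel_measurable (lborel \<Otimes>\<^sub>M lborel)" unfolding F2_def eix_def by (intro meas_l2) measurable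
      have "(\<lambda>x. \<integral>\<eta>. norm (case (x, \<eta>) of (x, \<eta>) \<Rightarrow> F2 x \<eta>) \<partial>lborel) = (\<lambda>x. wg d x * A1)"
        using wg_pos[of d] by (simp add: F2_def norm_mult A1_def abs_of_pos)
      then show "integrable lborel (\<lambda>x. \<integral>\<eta>. norm (case (x, \<eta>) of (x, \<eta>) \<Rightarrow> F2 x \<eta>) \<partial>lborel)"
        using wgA by simp
      have "integrable lborel (\<lambda>\<eta>. a \<eta> * eix x (\<eta> - \<xi>))" for x
      proof -
        have "(\<lambda>\<eta>. a \<eta> * eix x (\<eta> - \<xi>)) = (\<lambda>\<eta>. eix x (- \<xi>) * (a \<eta> * eix x \<eta>))"
          by (auto simp: eix_mult)
        then show ?thesis by (auto intro!: integrable_mult_right int_aE aint)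
      qed
      then show "AE x in lborel. integrable lborel (\<lambda>\<eta>. case (x, \<eta>) of (x, \<eta>) \<Rightarrow> F2 x \<eta>)"
        unfolding F2_def by (auto intro!: integrable_mult_right)
    qed
    have "(\<integral>x. F1 x \<xi> \<partial>lborel) = a \<xi> * (\<integral>x. complex_of_real (wg d x) * cnj (g x) * eix x \<xi> \<partial>lborel)"
      unfolding F1_def by (subst integral_mult_right_zero[symmetric]) (simp add: ac_simps)
    also have "(\<integral>x. complex_of_real (wg d x) * cnj (g x) * eix x \<xi> \<partial>lborel)
        = cnj (\<integral>x. complex_of_real (wg d x) * (g x * eix x (- \<xi>)) \<partial>lborel)"
      by (subst Bochner_Integration.integral_cnj[symmetric]) (simp add: cnj_eix mult.assoc)
    also have "(\<lambda>x. complex_of_real (wg d x) * (g x * eix x (- \<xi>))) = (\<lambda>x. \<integral>\<eta>. F2 x \<eta> \<partial>lborel)"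
    proof
      fix x
      have "g x * eix x (- \<xi>) = (\<integral>\<eta>. a \<eta> * eix x (\<eta> - \<xi>) \<partial>lborel)"
        unfolding g_def integral_mult_left_zero[symmetric]
        by (rule Bochner_Integration.integral_cong) (auto simp: eix_mult mult.assoc)
      then show "complex_of_real (wg d x) * (g x * eix x (- \<xi>)) = (\<integral>\<eta>. F2 x \<eta> \<partial>lborel)"
        unfolding F2_def integral_mult_right_zero by simp
    qed
    also have "(\<integral>x. \<integral>\<eta>. F2 x \<eta> \<partial>lborel \<partial>lborel) = (\<integral>\<eta>. \<integral>x. F2 x \<eta> \<partial>lborel \<partial>lborel)"
      by (rule lborel_pair.Fubini_integral[OF I2, symmetric])
    also have "\<dots> = h \<xi>"
      unfolding h_def F2_def
    proof (rule Bochner_Integration.integral_cong[OF refl])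
      fix \<eta>
      have "(\<integral>x. complex_of_real (wg d x) * (a \<eta> * eix x (\<eta> - \<xi>)) \<partial>lborel)
          = a \<eta> * (\<integral>x. complex_of_real (wg d x) * eix x (\<eta> - \<xi>) \<partial>lborel)"
        by (subst integral_mult_right_zero[symmetric]) (simp add: ac_simps)
      also have "\<dots> = a \<eta> * complex_of_real (2 * pi * normal_density 0 d (\<eta> - \<xi>))"
        by (simp only: gauss_ft'[OF d])
      finally show "(\<integral>x. complex_of_real (wg d x) * (a \<eta> * eix x (\<eta> - \<xi>)) \<partial>lborel)
          = a \<eta> * complex_of_real (2 * pi * normal_density 0 d (\<eta> - \<xi>))" .
    qed
    finally show ?thesis .
  qed
  have "(\<integral>x. complex_of_real (wg d x) * (cnj (g x) * g x) \<partial>lborel) = (\<integral>\<xi>. \<integral>x. F1 x \<xi> \<partial>lborel \<partial>lborel)"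
    unfolding R[symmetric] by (rule lborel_pair.Fubini_integral[OF I1, symmetric])
  also have "\<dots> = (\<integral>\<xi>. a \<xi> * cnj (h \<xi>) \<partial>lborel)" by (simp only: J)
  finally show ?thesis unfolding g_def h_def .
qed

lemma cs_bound:
  fixes a :: "real \<Rightarrow> complex"
  assumes ac: "continuous_on UNIV a" and supp: "\<And>\<xi>. L < \<bar>\<xi>\<bar> \<Longrightarrow> a \<xi> = 0"
  shows "\<exists>M\<ge>0. \<forall>\<xi>. cmod (a \<xi>) \<le> M"
proof -
  have "compact (a ` {-L..L})" by (rule compact_continuous_image) (auto intro: continuous_on_subset[OF ac])
  then obtain B where B: "\<forall>y\<in>a ` {-L..L}. norm y \<le> B" using compact_imp_bounded bounded_iff by metis
  show ?thesis
  proof (intro exI[of _ "max B 0"] conjI allI)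
    fix \<xi> show "cmod (a \<xi>) \<le> max B 0"
    proof (cases "\<bar>\<xi>\<bar> \<le> L")
      case True then have "\<xi> \<in> {-L..L}" by auto
      then show ?thesis using B by force
    next
      case False then show ?thesis using supp[of \<xi>] by simp
    qed
  qed simp
qed

lemma cs_int:
  fixes a :: "real \<Rightarrow> complex"
  assumes ac: "continuous_on UNIV a" and supp: "\<And>\<xi>. L < \<bar>\<xi>\<bar> \<Longrightarrow> a \<xi> = 0"
  shows "integrable lborel a"
proof -
  have "integrable lborel (\<lambda>x. indicator {-L..L} x *\<^sub>R a x)"
    by (rule borel_integrable_compact) (auto intro: continuous_on_subset[OF ac])
  moreover have "(\<lambda>x. indicator {-L..L} x *\<^sub>R a x) = a"
  proof
    fix x show "indicator {-L..L} x *\<^sub>R a x = a x"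
      using supp[of x] by (cases "\<bar>x\<bar> \<le> L") (auto simp: indicator_def abs_le_iff)
  qed
  ultimately show ?thesis by simp
qed

lemma cs_uc:
  fixes a :: "real \<Rightarrow> complex"
  assumes ac: "continuous_on UNIV a" and supp: "\<And>\<xi>. L < \<bar>\<xi>\<bar> \<Longrightarrow> a \<xi> = 0" and \<rho>: "0 < \<rho>"
  shows "\<exists>\<delta>>0. \<forall>\<xi> \<eta>. \<bar>\<eta> - \<xi>\<bar> < \<delta> \<longrightarrow> cmod (a \<eta> - a \<xi>) \<le> \<rho>"
proof -
  have "uniformly_continuous_on {-L-1..L+1} a"
    by (rule compact_uniformly_continuous) (auto intro: continuous_on_subset[OF ac])
  then obtain \<delta> where \<delta>: "\<delta> > 0" and H: "\<forall>x\<in>{-L-1..L+1}. \<forall>x'\<in>{-L-1..L+1}. dist x' x < \<delta> \<longrightarrow> dist (a x') (a x) < \<rho>"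
    unfolding uniformly_continuous_on_def using \<rho> by metis
  show ?thesis
  proof (intro exI[of _ "min \<delta> 1"] conjI allI impI)
    fix \<xi> \<eta> :: real assume d: "\<bar>\<eta> - \<xi>\<bar> < min \<delta> 1"
    show "cmod (a \<eta> - a \<xi>) \<le> \<rho>"
    proof (cases "\<bar>\<xi>\<bar> \<le> L \<or> \<bar>\<eta>\<bar> \<le> L")
      case True
      then have "\<xi> \<in> {-L-1..L+1}" "\<eta> \<in> {-L-1..L+1}" using d by auto
      moreover have "dist \<eta> \<xi> < \<delta>" using d by (simp add: dist_real_def)
      ultimately have "dist (a \<eta>) (a \<xi>) < \<rho>" using H by blast
      then show ?thesis by (simp add: dist_norm)
    next
      case False then show ?thesis using supp \<rho> by auto
    qed
  qed (use \<delta> in simp)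
qed

definition hconv :: "(real \<Rightarrow> complex) \<Rightarrow> real \<Rightarrow> real \<Rightarrow> complex" where
  "hconv a d \<xi> = (\<integral>\<eta>. a \<eta> * complex_of_real (2*pi*normal_density 0 d (\<eta> - \<xi>)) \<partial>lborel)"

lemma nd_shift: "normal_density 0 d (\<eta> - \<xi>) = normal_density \<xi> d \<eta>"
  unfolding normal_density_def by simp

lemma int_a_nd:
  fixes a :: "real \<Rightarrow> complex"
  assumes am: "a \<in> borel_measurable borel" and M: "\<forall>\<xi>. cmod (a \<xi>) \<le> M" and d: "0 < d"
  shows "integrable lborel (\<lambda>\<eta>. a \<eta> * complex_of_real (2*pi*normal_density \<xi> d \<eta>))"
proof (rule Bochner_Integration.integrable_bound[of _ "\<lambda>\<eta>. M * (2*pi*normal_density \<xi> d \<eta>)"])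
  show "integrable lborel (\<lambda>\<eta>. M * (2*pi*normal_density \<xi> d \<eta>))" using d by auto
  show "(\<lambda>\<eta>. a \<eta> * complex_of_real (2*pi*normal_density \<xi> d \<eta>)) \<in> borel_measurable lborel"
    using am by measurable
  show "AE x in lborel. norm (a x * complex_of_real (2*pi*normal_density \<xi> d x)) \<le> norm (M * (2*pi*normal_density \<xi> d x))"
  proof (intro AE_I2)
    fix x
    have "cmod (a x) * (2*pi*normal_density \<xi> d x) \<le> M * (2*pi*normal_density \<xi> d x)"
      using M by (intro mult_right_mono) auto
    moreover have "0 \<le> M" using M[rule_format, of 0] norm_ge_zero[of "a 0"] by linarith
    ultimately show "norm (a x * complex_of_real (2*pi*normal_density \<xi> d x)) \<le> norm (M * (2*pi*normal_density \<xi> d x))"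
      by (simp add: norm_mult abs_mult)
  qed
qed

lemma h_err:
  fixes a :: "real \<Rightarrow> complex"
  assumes am: "a \<in> borel_measurable borel" and M: "\<forall>\<xi>. cmod (a \<xi>) \<le> M"
    and uc: "\<forall>\<xi> \<eta>. \<bar>\<eta> - \<xi>\<bar> < \<delta> \<longrightarrow> cmod (a \<eta> - a \<xi>) \<le> \<rho>" and \<delta>: "0 < \<delta>" and \<rho>: "0 \<le> \<rho>" and d: "0 < d"
  shows "cmod (hconv a d \<xi> - 2*pi * a \<xi>) \<le> 2*pi*\<rho> + 2*pi*(2*M/\<delta>\<^sup>2)*d\<^sup>2"
proof -
  let ?n = "\<lambda>\<eta>. normal_density \<xi> d \<eta>"
  have i1: "integrable lborel ?n" using d by simp
  have i2: "integrable lborel (\<lambda>\<eta>. ?n \<eta> * (\<eta> - \<xi>)^2)" using d by (rule integrable_normal_moment)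
  have e1: "(\<integral>\<eta>. ?n \<eta> \<partial>lborel) = 1" using d by simp
  have e2: "(\<integral>\<eta>. ?n \<eta> * (\<eta> - \<xi>)^2 \<partial>lborel) = d\<^sup>2"
    using integral_normal_moment_even[OF d, of \<xi> 1] by simp
  have ia: "integrable lborel (\<lambda>\<eta>. a \<eta> * complex_of_real (2*pi*?n \<eta>))" by (rule int_a_nd[OF am M d])
  have ic: "integrable lborel (\<lambda>\<eta>. a \<xi> * complex_of_real (2*pi*?n \<eta>))"
    using d by (intro integrable_mult_right integrable_of_real) auto
  have M0: "0 \<le> M" using M[rule_format, of 0] norm_ge_zero[of "a 0"] by linarith
  have eq0: "hconv a d \<xi> - 2*pi * a \<xi> = (\<integral>\<eta>. a \<eta> * complex_of_real (2*pi*?n \<eta>) - a \<xi> * complex_of_real (2*pi*?n \<eta>) \<partial>lborel)"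
  proof -
    have "(\<integral>\<eta>. a \<xi> * complex_of_real (2*pi*?n \<eta>) \<partial>lborel) = a \<xi> * complex_of_real (2*pi * (\<integral>\<eta>. ?n \<eta> \<partial>lborel))"
      by (simp add: integral_mult_right_zero)
    also have "\<dots> = 2*pi * a \<xi>" using e1 by simp
    finally show ?thesis unfolding hconv_def nd_shift using Bochner_Integration.integral_diff[OF ia ic] by simp
  qed
  have "cmod (hconv a d \<xi> - 2*pi * a \<xi>) \<le> (\<integral>\<eta>. norm (a \<eta> * complex_of_real (2*pi*?n \<eta>) - a \<xi> * complex_of_real (2*pi*?n \<eta>)) \<partial>lborel)"
    unfolding eq0 by (rule integral_norm_bound)
  also have "\<dots> \<le> (\<integral>\<eta>. (\<rho> + (2*M/\<delta>\<^sup>2) * (\<eta> - \<xi>)^2) * (2*pi*?n \<eta>) \<partial>lborel)"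
  proof (rule integral_mono)
    show "integrable lborel (\<lambda>\<eta>. norm (a \<eta> * complex_of_real (2*pi*?n \<eta>) - a \<xi> * complex_of_real (2*pi*?n \<eta>)))"
      by (intro integrable_norm Bochner_Integration.integrable_diff ia ic)
    have "integrable lborel (\<lambda>\<eta>. (2*pi*\<rho>) * ?n \<eta> + (2*pi*(2*M/\<delta>\<^sup>2)) * (?n \<eta> * (\<eta> - \<xi>)^2))"
      using i1 i2 by (intro Bochner_Integration.integrable_add integrable_mult_right)
    then show "integrable lborel (\<lambda>\<eta>. (\<rho> + (2*M/\<delta>\<^sup>2) * (\<eta> - \<xi>)^2) * (2*pi*?n \<eta>))"
      by (simp add: algebra_simps)
    fix \<eta>
    have pw: "cmod (a \<eta> - a \<xi>) \<le> \<rho> + (2*M/\<delta>\<^sup>2) * (\<eta> - \<xi>)^2"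
    proof (cases "\<bar>\<eta> - \<xi>\<bar> < \<delta>")
      case True
      then have "cmod (a \<eta> - a \<xi>) \<le> \<rho>" using uc by blast
      moreover have "0 \<le> (2*M/\<delta>\<^sup>2) * (\<eta> - \<xi>)^2" using M0 by simp
      ultimately show ?thesis by linarith
    next
      case False
      then have "\<delta>\<^sup>2 \<le> (\<eta> - \<xi>)^2" using \<delta> by (metis abs_le_square_iff abs_of_pos not_less)
      then have "1 \<le> (\<eta> - \<xi>)^2 / \<delta>\<^sup>2" using \<delta> by simp
      then have "2*M \<le> 2*M * ((\<eta> - \<xi>)^2 / \<delta>\<^sup>2)" using M0 by (metis mult_left_mono mult.right_neutral mult_nonneg_nonneg zero_le_numeral)
      moreover have "cmod (a \<eta> - a \<xi>) \<le> 2*M"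
        using norm_triangle_ineq4[of "a \<eta>" "a \<xi>"] M by (metis add_mono mult_2 order_trans)
      ultimately show ?thesis using \<rho> by (simp add: field_simps)
    qed
    have "norm (a \<eta> * complex_of_real (2*pi*?n \<eta>) - a \<xi> * complex_of_real (2*pi*?n \<eta>))
        = cmod (a \<eta> - a \<xi>) * (2*pi*?n \<eta>)"
      unfolding left_diff_distrib[symmetric] norm_mult norm_of_real by simp
    also have "\<dots> \<le> (\<rho> + (2*M/\<delta>\<^sup>2) * (\<eta> - \<xi>)^2) * (2*pi*?n \<eta>)"
      using pw by (intro mult_right_mono) auto
    finally show "norm (a \<eta> * complex_of_real (2*pi*?n \<eta>) - a \<xi> * complex_of_real (2*pi*?n \<eta>))
        \<le> (\<rho> + (2*M/\<delta>\<^sup>2) * (\<eta> - \<xi>)^2) * (2*pi*?n \<eta>)" .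
  qed
  also have "\<dots> = (\<integral>\<eta>. (2*pi*\<rho>) * ?n \<eta> + (2*pi*(2*M/\<delta>\<^sup>2)) * (?n \<eta> * (\<eta> - \<xi>)^2) \<partial>lborel)"
    by (rule Bochner_Integration.integral_cong) (auto simp: algebra_simps)
  also have "\<dots> = (2*pi*\<rho>) * (\<integral>\<eta>. ?n \<eta> \<partial>lborel) + (2*pi*(2*M/\<delta>\<^sup>2)) * (\<integral>\<eta>. ?n \<eta> * (\<eta> - \<xi>)^2 \<partial>lborel)"
    using i1 i2 by (simp add: Bochner_Integration.integral_add integrable_mult_right)
  also have "\<dots> = 2*pi*\<rho> + 2*pi*(2*M/\<delta>\<^sup>2)*d\<^sup>2" using e1 e2 by simp
  finally show ?thesis .
qed

lemma hconv_meas[measurable]: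
  assumes [measurable]: "a \<in> borel_measurable borel"
  shows "hconv a d \<in> borel_measurable borel"
proof -
  have "(\<lambda>(\<xi>, \<eta>). a \<eta> * complex_of_real (2*pi*normal_density 0 d (\<eta> - \<xi>))) \<in> borel_measurable (borel \<Otimes>\<^sub>M lborel)"
    by (subst measurable_cong_sets[OF sets_pair_measure_cong[OF refl sets_lborel] refl]) measurable
  then show ?thesis unfolding hconv_def[abs_def] by (rule lborel.borel_measurable_lebesgue_integral)
qed

lemma hconv_bound:
  fixes a :: "real \<Rightarrow> complex"
  assumes am: "a \<in> borel_measurable borel" and M: "\<forall>\<xi>. cmod (a \<xi>) \<le> M" and d: "0 < d"
  shows "cmod (hconv a d \<xi>) \<le> 2*pi*M"
proof -
  have "cmod (hconv a d \<xi>) \<le> (\<integral>\<eta>. norm (a \<eta> * complex_of_real (2*pi*normal_density \<xi> d \<eta>)) \<partial>lborel)"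
    unfolding hconv_def nd_shift by (rule integral_norm_bound)
  also have "\<dots> \<le> (\<integral>\<eta>. M * (2*pi*normal_density \<xi> d \<eta>) \<partial>lborel)"
  proof (rule integral_mono)
    show "integrable lborel (\<lambda>\<eta>. norm (a \<eta> * complex_of_real (2*pi*normal_density \<xi> d \<eta>)))"
      by (intro integrable_norm int_a_nd[OF am M d])
    show "integrable lborel (\<lambda>\<eta>. M * (2*pi*normal_density \<xi> d \<eta>))" using d by auto
    fix \<eta>
    show "norm (a \<eta> * complex_of_real (2*pi*normal_density \<xi> d \<eta>)) \<le> M * (2*pi*normal_density \<xi> d \<eta>)"
    proof -
      have "\<bar>2*pi*normal_density \<xi> d \<eta>\<bar> = 2*pi*normal_density \<xi> d \<eta>" by simp
      then show ?thesis unfolding norm_mult norm_of_real using M by (simp add: mult_right_mono)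
    qed
  qed
  also have "\<dots> = 2*pi*M" using d by simp
  finally show ?thesis .
qed

lemma approx_key:
  fixes a :: "real \<Rightarrow> complex"
  assumes am: "a \<in> borel_measurable borel" and aint: "integrable lborel a" and M: "\<forall>\<xi>. cmod (a \<xi>) \<le> M"
    and uc: "\<forall>\<xi> \<eta>. \<bar>\<eta> - \<xi>\<bar> < \<delta> \<longrightarrow> cmod (a \<eta> - a \<xi>) \<le> \<rho>" and \<delta>: "0 < \<delta>" and \<rho>: "0 \<le> \<rho>" and d: "0 < d"
  shows "cmod ((\<integral>\<xi>. a \<xi> * cnj (hconv a d \<xi>) \<partial>lborel) - complex_of_real (2*pi * (\<integral>\<xi>. (cmod (a \<xi>))\<^sup>2 \<partial>lborel)))
      \<le> (\<integral>\<xi>. cmod (a \<xi>) \<partial>lborel) * (2*pi*\<rho> + 2*pi*(2*M/\<delta>\<^sup>2)*d\<^sup>2)"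
proof -
  define S where "S = 2*pi*\<rho> + 2*pi*(2*M/\<delta>\<^sup>2)*d\<^sup>2"
  note am[measurable]
  have M0: "0 \<le> M" using M[rule_format, of 0] norm_ge_zero[of "a 0"] by linarith
  have ih: "integrable lborel (\<lambda>\<xi>. a \<xi> * cnj (hconv a d \<xi>))"
  proof (rule Bochner_Integration.integrable_bound[of _ "\<lambda>\<xi>. cmod (a \<xi>) * (2*pi*M)"])
    show "integrable lborel (\<lambda>\<xi>. cmod (a \<xi>) * (2*pi*M))" using aint by (intro integrable_mult_left integrable_norm)
    show "(\<lambda>\<xi>. a \<xi> * cnj (hconv a d \<xi>)) \<in> borel_measurable lborel" by measurable
    show "AE x in lborel. norm (a x * cnj (hconv a d x)) \<le> norm (cmod (a x) * (2*pi*M))"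
      using hconv_bound[OF am M d] M0 by (intro AE_I2) (simp add: norm_mult mult_left_mono)
  qed
  have ia2: "integrable lborel (\<lambda>\<xi>. a \<xi> * cnj (2*pi * a \<xi>))"
  proof (rule Bochner_Integration.integrable_bound[of _ "\<lambda>\<xi>. cmod (a \<xi>) * (2*pi*M)"])
    show "integrable lborel (\<lambda>\<xi>. cmod (a \<xi>) * (2*pi*M))" using aint by (intro integrable_mult_left integrable_norm)
    show "(\<lambda>\<xi>. a \<xi> * cnj (2*pi * a \<xi>)) \<in> borel_measurable lborel" by measurable
    show "AE x in lborel. norm (a x * cnj (2*pi * a x)) \<le> norm (cmod (a x) * (2*pi*M))"
      using M M0 by (intro AE_I2) (simp add: norm_mult mult_left_mono)
  qed
  have e: "complex_of_real (2*pi * (\<integral>\<xi>. (cmod (a \<xi>))\<^sup>2 \<partial>lborel)) = (\<integral>\<xi>. a \<xi> * cnj (2*pi * a \<xi>) \<partial>lborel)"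
  proof -
    have "(\<integral>\<xi>. a \<xi> * cnj (2*pi * a \<xi>) \<partial>lborel) = (\<integral>\<xi>. complex_of_real (2*pi * (cmod (a \<xi>))\<^sup>2) \<partial>lborel)"
    proof (rule Bochner_Integration.integral_cong[OF refl])
      fix x
      have "a x * cnj (2*pi*a x) = complex_of_real (2*pi) * (a x * cnj (a x))" by simp
      also have "\<dots> = complex_of_real (2*pi) * complex_of_real ((cmod (a x))\<^sup>2)" by (simp only: complex_norm_square)
      also have "\<dots> = complex_of_real (2*pi*(cmod (a x))\<^sup>2)" by (simp only: of_real_mult)
      finally show "a x * cnj (2*pi*a x) = complex_of_real (2*pi*(cmod (a x))\<^sup>2)" .
    qed
    also have "\<dots> = complex_of_real (2*pi * (\<integral>\<xi>. (cmod (a \<xi>))\<^sup>2 \<partial>lborel))"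
      by (simp only: integral_complex_of_real integral_mult_right_zero)
    finally show ?thesis by simp
  qed
  have "cmod ((\<integral>\<xi>. a \<xi> * cnj (hconv a d \<xi>) \<partial>lborel) - complex_of_real (2*pi * (\<integral>\<xi>. (cmod (a \<xi>))\<^sup>2 \<partial>lborel)))
      = cmod (\<integral>\<xi>. a \<xi> * cnj (hconv a d \<xi>) - a \<xi> * cnj (2*pi * a \<xi>) \<partial>lborel)"
    unfolding e Bochner_Integration.integral_diff[OF ih ia2] ..
  also have "\<dots> \<le> (\<integral>\<xi>. norm (a \<xi> * cnj (hconv a d \<xi>) - a \<xi> * cnj (2*pi * a \<xi>)) \<partial>lborel)"
    by (rule integral_norm_bound)
  also have "\<dots> \<le> (\<integral>\<xi>. cmod (a \<xi>) * S \<partial>lborel)"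
  proof (rule integral_mono)
    show "integrable lborel (\<lambda>\<xi>. norm (a \<xi> * cnj (hconv a d \<xi>) - a \<xi> * cnj (2*pi * a \<xi>)))"
      by (intro integrable_norm Bochner_Integration.integrable_diff ih ia2)
    show "integrable lborel (\<lambda>\<xi>. cmod (a \<xi>) * S)" using aint by (intro integrable_mult_left integrable_norm)
    fix \<xi>
    have "a \<xi> * cnj (hconv a d \<xi>) - a \<xi> * cnj (2*pi * a \<xi>) = a \<xi> * cnj (hconv a d \<xi> - 2*pi * a \<xi>)"
      by (simp add: right_diff_distrib)
    then have "norm (a \<xi> * cnj (hconv a d \<xi>) - a \<xi> * cnj (2*pi * a \<xi>)) = cmod (a \<xi>) * cmod (hconv a d \<xi> - 2*pi * a \<xi>)"
      by (metis norm_mult complex_mod_cnj)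
    also have "\<dots> \<le> cmod (a \<xi>) * S"
      unfolding S_def by (intro mult_left_mono h_err[OF am M uc \<delta> \<rho> d]) auto
    finally show "norm (a \<xi> * cnj (hconv a d \<xi>) - a \<xi> * cnj (2*pi * a \<xi>)) \<le> cmod (a \<xi>) * S" .
  qed
  also have "\<dots> = (\<integral>\<xi>. cmod (a \<xi>) \<partial>lborel) * S" by simp
  finally show ?thesis unfolding S_def .
qed

lemma approx:
  fixes a :: "real \<Rightarrow> complex"
  assumes ac: "continuous_on UNIV a" and supp: "\<And>\<xi>. L < \<bar>\<xi>\<bar> \<Longrightarrow> a \<xi> = 0"
  shows "(\<lambda>n. \<integral>\<xi>. a \<xi> * cnj (hconv a (1 / Suc n) \<xi>) \<partial>lborel) \<longlonglongrightarrow> complex_of_real (2*pi * (\<integral>\<xi>. (cmod (a \<xi>))\<^sup>2 \<partial>lborel))"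
proof (rule LIMSEQ_I)
  fix r :: real assume r: "0 < r"
  obtain M where M0: "0 \<le> M" and M: "\<forall>\<xi>. cmod (a \<xi>) \<le> M" using cs_bound[OF ac supp] by blast
  have aint: "integrable lborel a" by (rule cs_int[OF ac supp])
  have am: "a \<in> borel_measurable borel" using ac by (rule borel_measurable_continuous_onI)
  define A1 where "A1 = (\<integral>\<xi>. cmod (a \<xi>) \<partial>lborel)"
  have A10: "0 \<le> A1" unfolding A1_def by simp
  define \<rho> where "\<rho> = r / (4*pi*(A1+1))"
  have \<rho>0: "0 < \<rho>" unfolding \<rho>_def using r A10 by simp
  obtain \<delta> where \<delta>: "0 < \<delta>" and uc: "\<forall>\<xi> \<eta>. \<bar>\<eta> - \<xi>\<bar> < \<delta> \<longrightarrow> cmod (a \<eta> - a \<xi>) \<le> \<rho>"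
    using cs_uc[OF ac supp \<rho>0] by blast
  define K where "K = 2*pi*(2*M/\<delta>\<^sup>2)"
  have K0: "0 \<le> K" unfolding K_def using M0 by simp
  obtain N :: nat where N: "(A1+1)*K*2/r < real N" using reals_Archimedean2 by blast
  show "\<exists>no. \<forall>n\<ge>no. norm ((\<integral>\<xi>. a \<xi> * cnj (hconv a (1 / Suc n) \<xi>) \<partial>lborel) - complex_of_real (2*pi * (\<integral>\<xi>. (cmod (a \<xi>))\<^sup>2 \<partial>lborel))) < r"
  proof (intro exI allI impI)
    fix n assume n: "N \<le> n"
    define d where "d = 1 / real (Suc n)"
    have d0: "0 < d" unfolding d_def by simp
    have d1: "d \<le> 1" unfolding d_def by simp
    have dd: "d\<^sup>2 \<le> d" using d0 d1 by (simp add: power2_eq_square mult_le_cancel_right1)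
    have "norm ((\<integral>\<xi>. a \<xi> * cnj (hconv a d \<xi>) \<partial>lborel) - complex_of_real (2*pi * (\<integral>\<xi>. (cmod (a \<xi>))\<^sup>2 \<partial>lborel)))
        \<le> A1 * (2*pi*\<rho> + K*d\<^sup>2)"
      unfolding A1_def K_def using approx_key[OF am aint M uc \<delta> less_imp_le[OF \<rho>0] d0] by simp
    also have "\<dots> \<le> (A1+1) * (2*pi*\<rho>) + (A1+1) * K * d"
    proof -
      have f1: "A1 * (2*pi*\<rho>) \<le> (A1+1) * (2*pi*\<rho>)" using \<rho>0 by (intro mult_right_mono) auto
      have f2: "A1 * (K*d\<^sup>2) \<le> (A1+1) * K * d"
      proof -
        have "A1 * (K*d\<^sup>2) \<le> (A1+1) * (K*d\<^sup>2)" using K0 by (intro mult_right_mono) auto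
        also have "\<dots> \<le> (A1+1) * (K*d)" using K0 A10 dd by (intro mult_left_mono) auto
        finally show ?thesis by (simp add: mult.assoc)
      qed
      show ?thesis unfolding distrib_left using f1 f2 by linarith
    qed
    also have "\<dots> < r"
    proof -
      have 1: "(A1+1) * (2*pi*\<rho>) = r/2"
      proof -
        define B where "B = A1 + 1"
        have B: "0 < B" unfolding B_def using A10 by simp
        show ?thesis unfolding \<rho>_def B_def[symmetric] using B by (simp add: field_simps)
      qed
      have "real N + 1 \<le> real (Suc n)" using n by simp
      have "(A1+1)*K*2 < r * real N" using N r by (simp add: field_simps)
      also have "\<dots> \<le> r * real (Suc n)" using n r by (intro mult_left_mono) auto
      finally have "(A1+1)*K*2 < r * real (Suc n)" .
      then have "(A1+1) * K * d < r/2" unfolding d_def by (simp add: field_simps)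
      then show ?thesis using 1 by linarith
    qed
    finally show "norm ((\<integral>\<xi>. a \<xi> * cnj (hconv a (1 / Suc n) \<xi>) \<partial>lborel) - complex_of_real (2*pi * (\<integral>\<xi>. (cmod (a \<xi>))\<^sup>2 \<partial>lborel))) < r"
      unfolding d_def by simp
  qed
qed

lemma plancherel:
  fixes a :: "real \<Rightarrow> complex"
  assumes ac: "continuous_on UNIV a" and supp: "\<And>\<xi>. L < \<bar>\<xi>\<bar> \<Longrightarrow> a \<xi> = 0"
  shows "(\<integral>\<^sup>+x. ennreal ((cmod (\<integral>\<xi>. a \<xi> * eix x \<xi> \<partial>lborel))\<^sup>2) \<partial>lborel)
           = ennreal (2*pi * (\<integral>\<xi>. (cmod (a \<xi>))\<^sup>2 \<partial>lborel))"
proof -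
  define g where "g x = (\<integral>\<xi>. a \<xi> * eix x \<xi> \<partial>lborel)" for x
  have aint: "integrable lborel a" by (rule cs_int[OF ac supp])
  have am[measurable]: "a \<in> borel_measurable borel" using ac by (rule borel_measurable_continuous_onI)
  have gm[measurable]: "g \<in> borel_measurable borel" unfolding g_def[abs_def] using g_meas[of a] by simp
  define A1 where "A1 = (\<integral>\<xi>. norm (a \<xi>) \<partial>lborel)"
  have gb: "norm (g x) \<le> A1" for x unfolding g_def A1_def by (rule g_bound[OF aint])
  have A10: "0 \<le> A1" using gb[of 0] norm_ge_zero[of "g 0"] by linarith
  define R where "R n = (\<integral>x. wg (1 / Suc n) x * (cmod (g x))\<^sup>2 \<partial>lborel)" for n :: nat
  have Rint: "integrable lborel (\<lambda>x. wg (1 / Suc n) x * (cmod (g x))\<^sup>2)" for n :: nat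
  proof (rule Bochner_Integration.integrable_bound[of _ "\<lambda>x. wg (1 / Suc n) x * A1\<^sup>2"])
    show "integrable lborel (\<lambda>x. wg (1 / Suc n) x * A1\<^sup>2)" by (intro integrable_mult_left wg_int) simp
    show "(\<lambda>x. wg (1 / Suc n) x * (cmod (g x))\<^sup>2) \<in> borel_measurable lborel" by measurable
    show "AE x in lborel. norm (wg (1 / Suc n) x * (cmod (g x))\<^sup>2) \<le> norm (wg (1 / Suc n) x * A1\<^sup>2)"
    proof (intro AE_I2)
      fix x
      have "(cmod (g x))\<^sup>2 \<le> A1\<^sup>2" using gb[of x] by (intro power_mono) auto
      then have "wg (1 / Suc n) x * (cmod (g x))\<^sup>2 \<le> wg (1 / Suc n) x * A1\<^sup>2"
        using wg_pos[of "1 / Suc n" x] by (intro mult_left_mono) auto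
      then show "norm (wg (1 / Suc n) x * (cmod (g x))\<^sup>2) \<le> norm (wg (1 / Suc n) x * A1\<^sup>2)"
        using wg_pos[of "1 / Suc n" x] by (simp add: abs_mult)
    qed
  qed
  have QR: "complex_of_real (R n) = (\<integral>\<xi>. a \<xi> * cnj (hconv a (1 / Suc n) \<xi>) \<partial>lborel)" for n :: nat
  proof -
    have "complex_of_real (R n) = (\<integral>x. complex_of_real (wg (1 / Suc n) x) * (cnj (g x) * g x) \<partial>lborel)"
      unfolding R_def integral_complex_of_real[symmetric]
    proof (rule Bochner_Integration.integral_cong[OF refl])
      fix x
      have "cnj (g x) * g x = complex_of_real ((cmod (g x))\<^sup>2)" by (simp only: complex_norm_square mult.commute)
      then show "complex_of_real (wg (1 / Suc n) x * (cmod (g x))\<^sup>2) = complex_of_real (wg (1 / Suc n) x) * (cnj (g x) * g x)"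
        by simp
    qed
    also have "\<dots> = (\<integral>\<xi>. a \<xi> * cnj (hconv a (1 / Suc n) \<xi>) \<partial>lborel)"
      unfolding g_def hconv_def by (rule step1[OF aint]) simp
    finally show ?thesis .
  qed
  have "(\<lambda>n. complex_of_real (R n)) \<longlonglongrightarrow> complex_of_real (2*pi * (\<integral>\<xi>. (cmod (a \<xi>))\<^sup>2 \<partial>lborel))"
    unfolding QR by (rule approx[OF ac supp])
  then have "(\<lambda>n. Re (complex_of_real (R n))) \<longlonglongrightarrow> Re (complex_of_real (2*pi * (\<integral>\<xi>. (cmod (a \<xi>))\<^sup>2 \<partial>lborel)))"
    by (rule tendsto_Re)
  then have "R \<longlonglongrightarrow> 2*pi * (\<integral>\<xi>. (cmod (a \<xi>))\<^sup>2 \<partial>lborel)" by (simp only: Re_complex_of_real)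
  then have T1: "(\<lambda>n. ennreal (R n)) \<longlonglongrightarrow> ennreal (2*pi * (\<integral>\<xi>. (cmod (a \<xi>))\<^sup>2 \<partial>lborel))"
    by (rule tendsto_ennrealI)
  have E: "(\<lambda>n. ennreal (R n)) = (\<lambda>n. \<integral>\<^sup>+x. ennreal (wg (1 / Suc n) x * (cmod (g x))\<^sup>2) \<partial>lborel)"
  proof
    fix n :: nat
    show "ennreal (R n) = (\<integral>\<^sup>+x. ennreal (wg (1 / Suc n) x * (cmod (g x))\<^sup>2) \<partial>lborel)"
      unfolding R_def using wg_pos[of "1 / Suc n"]
      by (intro nn_integral_eq_integral[symmetric] Rint AE_I2) (simp add: less_imp_le)
  qed
  have T2: "(\<lambda>n. \<integral>\<^sup>+x. ennreal (wg (1 / Suc n) x * (cmod (g x))\<^sup>2) \<partial>lborel)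
      \<longlonglongrightarrow> (\<integral>\<^sup>+x. ennreal ((cmod (g x))\<^sup>2) \<partial>lborel)"
  proof (rule nn_integral_LIMSEQ)
    show "incseq (\<lambda>n x. ennreal (wg (1 / Suc n) x * (cmod (g x))\<^sup>2))"
    proof (rule incseq_SucI, rule le_funI)
      fix n x
      have "(x / real (Suc (Suc n)))\<^sup>2 \<le> (x / real (Suc n))\<^sup>2"
      proof -
        have "\<bar>x / real (Suc (Suc n))\<bar> \<le> \<bar>x / real (Suc n)\<bar>"
          by (simp add: frac_le abs_divide)
        then show ?thesis using abs_le_square_iff by blast
      qed
      then have "wg (1 / Suc n) x \<le> wg (1 / Suc (Suc n)) x"
        unfolding wg_def by simp
      then show "ennreal (wg (1 / Suc n) x * (cmod (g x))\<^sup>2) \<le> ennreal (wg (1 / Suc (Suc n)) x * (cmod (g x))\<^sup>2)"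
        by (intro ennreal_leI mult_right_mono) auto
    qed
    show "\<And>n. (\<lambda>x. ennreal (wg (1 / Suc n) x * (cmod (g x))\<^sup>2)) \<in> borel_measurable lborel" by measurable
    fix x
    have "(\<lambda>n. inverse (real (Suc n)) * x) \<longlonglongrightarrow> 0 * x"
      by (intro tendsto_intros LIMSEQ_inverse_real_of_nat)
    note L = this
    have "(\<lambda>n. exp (- (inverse (real (Suc n)) * x)\<^sup>2 / 2) * (cmod (g x))\<^sup>2) \<longlonglongrightarrow> exp (- (0 * x)\<^sup>2 / 2) * (cmod (g x))\<^sup>2"
      by (intro tendsto_mult tendsto_const tendsto_exp tendsto_divide tendsto_minus tendsto_power L) auto
    then have "(\<lambda>n. wg (1 / Suc n) x * (cmod (g x))\<^sup>2) \<longlonglongrightarrow> (cmod (g x))\<^sup>2"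
    proof -
      have e1: "(\<lambda>n. wg (1 / Suc n) x * (cmod (g x))\<^sup>2) = (\<lambda>n. exp (- (inverse (real (Suc n)) * x)\<^sup>2 / 2) * (cmod (g x))\<^sup>2)"
        by (simp add: wg_def inverse_eq_divide)
      have e2: "exp (- (0 * x)\<^sup>2 / 2) * (cmod (g x))\<^sup>2 = (cmod (g x))\<^sup>2" by simp
      show ?thesis using \<open>(\<lambda>n. exp (- (inverse (real (Suc n)) * x)\<^sup>2 / 2) * (cmod (g x))\<^sup>2) \<longlonglongrightarrow> exp (- (0 * x)\<^sup>2 / 2) * (cmod (g x))\<^sup>2\<close>
        unfolding e1 e2 .
    qed
    then show "(\<lambda>n. ennreal (wg (1 / Suc n) x * (cmod (g x))\<^sup>2)) \<longlonglongrightarrow> ennreal ((cmod (g x))\<^sup>2)"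
      by (rule tendsto_ennrealI)
  qed
  from T2 have "(\<lambda>n. ennreal (R n)) \<longlonglongrightarrow> (\<integral>\<^sup>+x. ennreal ((cmod (g x))\<^sup>2) \<partial>lborel)"
    unfolding E .
  from LIMSEQ_unique[OF this T1] show ?thesis unfolding g_def .
qed

lemma fourier_cont:
  assumes f: "integrable lborel f"
  shows "continuous_on UNIV (fourier f)"
proof (rule continuous_at_imp_continuous_on, intro ballI)
  fix t :: real
  have fm[measurable]: "f \<in> borel_measurable lborel" using f by (rule borel_measurable_integrable)
  show "isCont (fourier f) t"
    unfolding continuous_at_sequentially
  proof safe
    fix X assume X: "X \<longlonglongrightarrow> t"
    show "(fourier f \<circ> X) \<longlonglongrightarrow> fourier f t"
      unfolding comp_def fourier_def
    proof (rule integral_dominated_convergence[where w="\<lambda>x. norm (f x)"])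
      show "integrable lborel (\<lambda>x. norm (f x))" using f by simp
      show "(\<lambda>x. f x * exp (- (\<i> * complex_of_real (x * t)))) \<in> borel_measurable lborel" by measurable
      show "(\<lambda>x. f x * exp (- (\<i> * complex_of_real (x * X i)))) \<in> borel_measurable lborel" for i by measurable
      show "AE x in lborel. (\<lambda>i. f x * exp (- (\<i> * complex_of_real (x * X i)))) \<longlonglongrightarrow> f x * exp (- (\<i> * complex_of_real (x * t)))"
        by (intro AE_I2 tendsto_intros X)
      show "AE x in lborel. norm (f x * exp (- (\<i> * complex_of_real (x * X i)))) \<le> norm (f x)" for i
      proof (intro AE_I2)
        fix x
        have "norm (exp (- (\<i> * complex_of_real (x * X i)))) = 1"
          using norm_exp_i_times[of "- (x * X i)"] by simp
        then show "norm (f x * exp (- (\<i> * complex_of_real (x * X i)))) \<le> norm (f x)"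
          by (simp add: norm_mult)
      qed
    qed
  qed
qed

definition om :: "real \<Rightarrow> real" where "om \<xi> = sqrt (4 * \<xi>\<^sup>2 - 1)"

lemma om_pos: "1/2 < \<bar>\<xi>\<bar> \<Longrightarrow> 0 < om \<xi>"
proof -
  assume h: "1/2 < \<bar>\<xi>\<bar>"
  have "(1/2)\<^sup>2 < (\<bar>\<xi>\<bar>)\<^sup>2" using h by (intro power_strict_mono) auto
  then have "1/4 < \<xi>\<^sup>2" by (simp add: power2_eq_square)
  then show ?thesis unfolding om_def by simp
qed

lemma D1sym_hi: "1/2 < \<bar>\<xi>\<bar> \<Longrightarrow> D1sym t \<xi> = exp (- t / 2) * (2 / om \<xi>) * sin (t * om \<xi> / 2)"
  unfolding D1sym_def om_def by simp

lemma dtD1sym_hi: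
  assumes h: "1/2 < \<bar>\<xi>\<bar>"
  shows "dtD1sym t \<xi> = exp (- t / 2) * (cos (t * om \<xi> / 2) - sin (t * om \<xi> / 2) / om \<xi>)"
proof -
  have w: "0 < om \<xi>" using h by (rule om_pos)
  have e: "(\<lambda>\<tau>. D1sym \<tau> \<xi>) = (\<lambda>\<tau>. exp (- \<tau> / 2) * (2 / om \<xi>) * sin (\<tau> * om \<xi> / 2))"
    using D1sym_hi[OF h] by auto
  have D0: "((\<lambda>\<tau>. exp (- \<tau> / 2) * (2 / om \<xi>) * sin (\<tau> * om \<xi> / 2)) has_real_derivative
      (exp (- t / 2) * (- 1 / 2)) * (2 / om \<xi>) * sin (t * om \<xi> / 2) + exp (- t / 2) * (2 / om \<xi>) * (cos (t * om \<xi> / 2) * (om \<xi> / 2))) (at t)"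
    using w by (auto intro!: derivative_eq_intros simp: field_simps)
  have EQ: "(exp (- t / 2) * (- 1 / 2)) * (2 / om \<xi>) * sin (t * om \<xi> / 2) + exp (- t / 2) * (2 / om \<xi>) * (cos (t * om \<xi> / 2) * (om \<xi> / 2))
      = exp (- t / 2) * (cos (t * om \<xi> / 2) - sin (t * om \<xi> / 2) / om \<xi>)"
  proof -
    have A: "exp (- t / 2) * (2 / om \<xi>) * (cos (t * om \<xi> / 2) * (om \<xi> / 2)) = exp (- t / 2) * cos (t * om \<xi> / 2)"
      using w by simp
    have B: "(exp (- t / 2) * (- 1 / 2)) * (2 / om \<xi>) * sin (t * om \<xi> / 2) = - (exp (- t / 2) * sin (t * om \<xi> / 2) / om \<xi>)"
      by simp
    show ?thesis unfolding A B by (simp add: right_diff_distrib)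
  qed
  from D0 have D: "((\<lambda>\<tau>. exp (- \<tau> / 2) * (2 / om \<xi>) * sin (\<tau> * om \<xi> / 2)) has_real_derivative
      exp (- t / 2) * (cos (t * om \<xi> / 2) - sin (t * om \<xi> / 2) / om \<xi>)) (at t)" unfolding EQ .
  show ?thesis unfolding dtD1sym_def e by (rule DERIV_imp_deriv[OF D])
qed

lemma om_ge: assumes "1 \<le> \<bar>\<xi>\<bar>" shows "\<bar>\<xi>\<bar> \<le> om \<xi>" "1 \<le> om \<xi>"
proof -
  have "1\<^sup>2 \<le> (\<bar>\<xi>\<bar>)\<^sup>2" using assms by (intro power_mono) auto
  then have s: "1 \<le> \<xi>\<^sup>2" by simp
  have "(\<bar>\<xi>\<bar>)\<^sup>2 \<le> 4 * \<xi>\<^sup>2 - 1" using s by simp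
  then have "sqrt ((\<bar>\<xi>\<bar>)\<^sup>2) \<le> om \<xi>" unfolding om_def by (rule real_sqrt_le_mono)
  then show "\<bar>\<xi>\<bar> \<le> om \<xi>" by simp
  then show "1 \<le> om \<xi>" using assms by linarith
qed

lemma D1sym_bound:
  assumes "1 \<le> \<bar>\<xi>\<bar>"
  shows "\<bar>D1sym t \<xi>\<bar> \<le> 2 * exp (- t / 2) / \<bar>\<xi>\<bar>"
proof -
  have h: "1/2 < \<bar>\<xi>\<bar>" using assms by simp
  have w: "\<bar>\<xi>\<bar> \<le> om \<xi>" "0 < om \<xi>" using om_ge[OF assms] om_pos[OF h] by auto
  have "\<bar>D1sym t \<xi>\<bar> = exp (- t / 2) * (2 / om \<xi>) * \<bar>sin (t * om \<xi> / 2)\<bar>"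
    using w by (simp add: D1sym_hi[OF h] abs_mult)
  also have "\<dots> \<le> exp (- t / 2) * (2 / om \<xi>) * 1"
    using w by (intro mult_left_mono) auto
  also have "\<dots> = exp (- t / 2) * (2 / om \<xi>)" by simp
  also have "\<dots> \<le> exp (- t / 2) * (2 / \<bar>\<xi>\<bar>)"
  proof -
    have "2 / om \<xi> \<le> 2 / \<bar>\<xi>\<bar>" using w assms by (intro frac_le) auto
    then show ?thesis by (intro mult_left_mono) auto
  qed
  finally show ?thesis by (simp add: mult.commute)
qed

lemma dtD1sym_bound:
  assumes "1 \<le> \<bar>\<xi>\<bar>"
  shows "\<bar>dtD1sym t \<xi>\<bar> \<le> 2 * exp (- t / 2)"
proof -
  have h: "1/2 < \<bar>\<xi>\<bar>" using assms by simp
  have w: "1 \<le> om \<xi>" using om_ge[OF assms] by auto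
  have "\<bar>sin (t * om \<xi> / 2) / om \<xi>\<bar> \<le> 1"
  proof -
    have "\<bar>sin (t * om \<xi> / 2)\<bar> \<le> om \<xi>" using abs_sin_le_one[of "t * om \<xi> / 2"] w by linarith
    then show ?thesis using w by (simp add: abs_divide)
  qed
  moreover have "\<bar>cos (t * om \<xi> / 2)\<bar> \<le> 1" by simp
  ultimately have "\<bar>cos (t * om \<xi> / 2) - sin (t * om \<xi> / 2) / om \<xi>\<bar> \<le> 2" by linarith
  then show ?thesis unfolding dtD1sym_hi[OF h] abs_mult
    by (simp add: mult_left_mono mult.commute)
qed

lemma psi_lo:
  assumes one: "\<forall>\<xi>. \<bar>\<xi>\<bar> \<le> 1 \<longrightarrow> chi \<xi> = 1" and h: "\<bar>\<xi>\<bar> \<le> 2 powr (real_of_int j - 1)"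
  shows "psi chi j \<xi> = 0"
proof -
  define P where "P = 2 powr real_of_int j"
  have P: "0 < P" unfolding P_def by simp
  have e: "2 powr (real_of_int j - 1) = P / 2" unfolding P_def by (simp add: powr_diff)
  have "\<bar>\<xi> / P\<bar> \<le> 1" using h P unfolding e by (simp add: abs_divide divide_le_eq)
  moreover have "\<bar>\<xi> / (P / 2)\<bar> \<le> 1" using h P unfolding e by (simp add: abs_divide divide_le_eq)
  ultimately show ?thesis using one unfolding psi_def chi_le_def e[symmetric] P_def
    by (simp add: powr_diff)
qed

lemma psi_hi:
  assumes zero: "\<forall>\<xi>. 2 \<le> \<bar>\<xi>\<bar> \<longrightarrow> chi \<xi> = 0" and h: "2 powr (real_of_int j + 1) \<le> \<bar>\<xi>\<bar>"
  shows "psi chi j \<xi> = 0"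
proof -
  define P where "P = 2 powr real_of_int j"
  have P: "0 < P" unfolding P_def by simp
  have e: "2 powr (real_of_int j + 1) = P * 2" unfolding P_def by (simp add: powr_add)
  have e2: "2 powr (real_of_int j - 1) = P / 2" unfolding P_def by (simp add: powr_diff)
  have "2 \<le> \<bar>\<xi> / P\<bar>" using h P unfolding e by (simp add: abs_divide le_divide_eq)
  moreover have "2 \<le> \<bar>\<xi> / (P / 2)\<bar>" using h P unfolding e by (simp add: abs_divide le_divide_eq)
  ultimately show ?thesis using zero unfolding psi_def chi_le_def
    by (simp add: e2 P_def[symmetric])
qed

lemma psi_cont:
  assumes c: "continuous_on UNIV chi"
  shows "continuous_on UNIV (psi chi j)"
proof -
  have "continuous_on UNIV (\<lambda>\<xi>. chi (\<xi> / a))" for a :: real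
  proof -
    have "continuous_on UNIV (\<lambda>x::real. x * (1/a))" by (intro continuous_intros)
    then have "continuous_on UNIV (\<lambda>x::real. x / a)" by simp
    then show ?thesis by (rule continuous_on_compose2[OF c]) auto
  qed
  then show ?thesis unfolding psi_def[abs_def] chi_le_def by (intro continuous_intros)
qed

lemma glue_cont:
  fixes p c h :: "real \<Rightarrow> real"
  assumes p: "continuous_on UNIV p" and c: "continuous_on UNIV c" and c0: "\<forall>\<xi>. \<bar>\<xi>\<bar> \<le> 1 \<longrightarrow> c \<xi> = 0"
    and h: "continuous_on {\<xi>. 1/2 < \<bar>\<xi>\<bar>} h"
  shows "continuous_on UNIV (\<lambda>\<xi>. p \<xi> * (h \<xi> * c \<xi>))"
  unfolding continuous_on_eq_continuous_at[OF open_UNIV]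
proof (intro ballI)
  fix x :: real
  have oS: "open {\<xi>::real. 1/2 < \<bar>\<xi>\<bar>}" by (intro open_Collect_less continuous_intros)
  have oT: "open {\<xi>::real. \<bar>\<xi>\<bar> < 1}" by (intro open_Collect_less continuous_intros)
  show "isCont (\<lambda>\<xi>. p \<xi> * (h \<xi> * c \<xi>)) x"
  proof (cases "1/2 < \<bar>x\<bar>")
    case True
    have "isCont h x" using h oS True by (simp add: continuous_on_eq_continuous_at)
    moreover have "isCont p x" "isCont c x" using p c by (simp_all add: continuous_on_eq_continuous_at)
    ultimately show ?thesis by (intro continuous_intros)
  next
    case False
    then have "x \<in> {\<xi>. \<bar>\<xi>\<bar> < 1}" by simp
    then have "\<forall>\<^sub>F y in nhds x. y \<in> {\<xi>. \<bar>\<xi>\<bar> < 1}" by (rule eventually_nhds_in_open[OF oT])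
    then have "\<forall>\<^sub>F y in nhds x. p y * (h y * c y) = 0"
      by eventually_elim (use c0 in auto)
    then have "isCont (\<lambda>\<xi>. p \<xi> * (h \<xi> * c \<xi>)) x = isCont (\<lambda>_. 0::real) x" by (rule isCont_cong)
    then show ?thesis by simp
  qed
qed

lemma om_cont: "continuous_on S om"
  unfolding om_def by (intro continuous_intros)

lemma D1_cont: "continuous_on {\<xi>. 1/2 < \<bar>\<xi>\<bar>} (D1sym t)"
proof -
  have "continuous_on {\<xi>. 1/2 < \<bar>\<xi>\<bar>} (\<lambda>\<xi>. exp (- t / 2) * (2 / om \<xi>) * sin (t * om \<xi> / 2))"
  proof -
    have nz: "\<And>\<xi>. \<xi> \<in> {\<xi>. 1/2 < \<bar>\<xi>\<bar>} \<Longrightarrow> om \<xi> \<noteq> 0" using om_pos by force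
    show ?thesis by (intro continuous_intros om_cont) (use nz in auto)
  qed
  then show ?thesis by (rule continuous_on_cong[THEN iffD1, rotated 2]) (auto simp: D1sym_hi)
qed

lemma dtD1_cont: "continuous_on {\<xi>. 1/2 < \<bar>\<xi>\<bar>} (dtD1sym t)"
proof -
  have "continuous_on {\<xi>. 1/2 < \<bar>\<xi>\<bar>} (\<lambda>\<xi>. exp (- t / 2) * (cos (t * om \<xi> / 2) - sin (t * om \<xi> / 2) / om \<xi>))"
  proof -
    have nz: "\<And>\<xi>. \<xi> \<in> {\<xi>. 1/2 < \<bar>\<xi>\<bar>} \<Longrightarrow> om \<xi> \<noteq> 0" using om_pos by force
    show ?thesis by (intro continuous_intros om_cont) (use nz in auto)
  qed
  then show ?thesis by (rule continuous_on_cong[THEN iffD1, rotated 2]) (auto simp: dtD1sym_hi)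
qed

lemma powr_cont: "continuous_on {\<xi>. 1/2 < \<bar>\<xi>\<bar>} (\<lambda>\<xi>::real. \<bar>\<xi>\<bar> powr e)"
  by (intro continuous_intros) auto

lemma key_ineq:
  assumes h: "2 powr (real_of_int j - 1) < \<bar>\<xi>\<bar>" and g0: "0 \<le> \<gamma>" and g1: "\<gamma> \<le> 1/2"
  shows "2 \<le> 3 * 2 powr (- real_of_int j * \<gamma>) * \<bar>\<xi>\<bar> powr \<gamma>"
proof -
  have "(2 powr (real_of_int j - 1)) powr \<gamma> \<le> \<bar>\<xi>\<bar> powr \<gamma>" using h g0 by (intro powr_mono2) auto
  then have A: "2 powr ((real_of_int j - 1) * \<gamma>) \<le> \<bar>\<xi>\<bar> powr \<gamma>" by (simp add: powr_powr)
  have B: "2 powr (- real_of_int j * \<gamma>) * 2 powr ((real_of_int j - 1) * \<gamma>) = 2 powr (- \<gamma>)"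
    by (simp add: powr_add[symmetric] algebra_simps)
  have C: "2 powr (- 1/2) \<le> 2 powr (- \<gamma>)" using g1 by (intro powr_mono) auto
  have "2 powr (1/2) = sqrt 2" by (simp add: powr_half_sqrt)
  then have "2 powr (- 1/2) = 1 / sqrt 2" by (simp add: powr_minus_divide)
  moreover have "sqrt 2 \<le> 3/2"
    by (rule real_le_lsqrt) (auto simp: power2_eq_square)
  moreover have "(2::real)/3 \<le> 1 / sqrt 2"
  proof -
    have "0 < sqrt (2::real)" by simp
    then show ?thesis using \<open>sqrt 2 \<le> 3/2\<close> by (simp add: field_simps)
  qed
  ultimately have D: "2/3 \<le> (2::real) powr (- 1/2)" by simp
  have "2 \<le> 3 * 2 powr (- \<gamma>)" using C D by linarith
  also have "\<dots> = 3 * (2 powr (- real_of_int j * \<gamma>) * 2 powr ((real_of_int j - 1) * \<gamma>))" using B by simp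
  also have "\<dots> \<le> 3 * (2 powr (- real_of_int j * \<gamma>) * \<bar>\<xi>\<bar> powr \<gamma>)"
    using A by (intro mult_left_mono) auto
  finally show ?thesis by (simp add: mult.assoc)
qed

lemma supp_facts:
  assumes one: "\<forall>\<xi>. \<bar>\<xi>\<bar> \<le> 1 \<longrightarrow> chi \<xi> = 1"
    and nz: "psi chi j \<xi> \<noteq> 0" "chi_gt1 chi \<xi> \<noteq> 0"
  shows "1 < \<bar>\<xi>\<bar>" "2 powr (real_of_int j - 1) < \<bar>\<xi>\<bar>"
proof -
  show "1 < \<bar>\<xi>\<bar>" using nz(2) one unfolding chi_gt1_def by force
  show "2 powr (real_of_int j - 1) < \<bar>\<xi>\<bar>" using psi_lo[OF one, of \<xi> j] nz(1) by force
qed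

lemma cmp_D1:
  assumes one: "\<forall>\<xi>. \<bar>\<xi>\<bar> \<le> 1 \<longrightarrow> chi \<xi> = 1" and g0: "0 \<le> \<gamma>" and g1: "\<gamma> \<le> 1/2"
  shows "\<bar>psi chi j \<xi> * (D1sym t \<xi> * chi_gt1 chi \<xi>)\<bar>
    \<le> 3 * exp (- t / 2) * 2 powr (- real_of_int j * \<gamma>) * \<bar>psi chi j \<xi> * (\<bar>\<xi>\<bar> powr (\<gamma> - 1) * chi_gt1 chi \<xi>)\<bar>"
proof (cases "psi chi j \<xi> = 0 \<or> chi_gt1 chi \<xi> = 0")
  case True then show ?thesis by auto
next
  case False
  then have nz: "psi chi j \<xi> \<noteq> 0" "chi_gt1 chi \<xi> \<noteq> 0" by auto
  note s = supp_facts[OF one nz]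
  define P where "P = \<bar>psi chi j \<xi>\<bar> * \<bar>chi_gt1 chi \<xi>\<bar>"
  have P: "0 \<le> P" unfolding P_def by simp
  have x0: "0 < \<bar>\<xi>\<bar>" using s by simp
  have "\<bar>psi chi j \<xi> * (D1sym t \<xi> * chi_gt1 chi \<xi>)\<bar> = P * \<bar>D1sym t \<xi>\<bar>" unfolding P_def by (simp add: abs_mult)
  also have "\<dots> \<le> P * (2 * exp (- t / 2) / \<bar>\<xi>\<bar>)" using D1sym_bound[of \<xi> t] s P by (intro mult_left_mono) auto
  also have "\<dots> \<le> P * ((3 * 2 powr (- real_of_int j * \<gamma>) * \<bar>\<xi>\<bar> powr \<gamma>) * exp (- t / 2) / \<bar>\<xi>\<bar>)"
    using key_ineq[OF s(2) g0 g1] P x0 by (intro mult_left_mono divide_right_mono mult_right_mono) auto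
  also have "\<dots> = 3 * exp (- t / 2) * 2 powr (- real_of_int j * \<gamma>) * \<bar>psi chi j \<xi> * (\<bar>\<xi>\<bar> powr (\<gamma> - 1) * chi_gt1 chi \<xi>)\<bar>"
    unfolding P_def using x0 by (simp add: abs_mult powr_diff)
  finally show ?thesis .
qed

lemma cmp_dt:
  assumes one: "\<forall>\<xi>. \<bar>\<xi>\<bar> \<le> 1 \<longrightarrow> chi \<xi> = 1" and g0: "0 \<le> \<gamma>" and g1: "\<gamma> \<le> 1/2"
  shows "\<bar>psi chi j \<xi> * (dtD1sym t \<xi> * chi_gt1 chi \<xi>)\<bar>
    \<le> 3 * exp (- t / 2) * 2 powr (- real_of_int j * \<gamma>) * \<bar>psi chi j \<xi> * (\<bar>\<xi>\<bar> powr \<gamma> * chi_gt1 chi \<xi>)\<bar>"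
proof (cases "psi chi j \<xi> = 0 \<or> chi_gt1 chi \<xi> = 0")
  case True then show ?thesis by auto
next
  case False
  then have nz: "psi chi j \<xi> \<noteq> 0" "chi_gt1 chi \<xi> \<noteq> 0" by auto
  note s = supp_facts[OF one nz]
  define P where "P = \<bar>psi chi j \<xi>\<bar> * \<bar>chi_gt1 chi \<xi>\<bar>"
  have P: "0 \<le> P" unfolding P_def by simp
  have x0: "0 < \<bar>\<xi>\<bar>" using s by simp
  have "\<bar>psi chi j \<xi> * (dtD1sym t \<xi> * chi_gt1 chi \<xi>)\<bar> = P * \<bar>dtD1sym t \<xi>\<bar>" unfolding P_def by (simp add: abs_mult)
  also have "\<dots> \<le> P * (2 * exp (- t / 2))" using dtD1sym_bound[of \<xi> t] s P by (intro mult_left_mono) auto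
  also have "\<dots> \<le> P * ((3 * 2 powr (- real_of_int j * \<gamma>) * \<bar>\<xi>\<bar> powr \<gamma>) * exp (- t / 2))"
    using key_ineq[OF s(2) g0 g1] P x0 by (intro mult_left_mono mult_right_mono) auto
  also have "\<dots> = 3 * exp (- t / 2) * 2 powr (- real_of_int j * \<gamma>) * \<bar>psi chi j \<xi> * (\<bar>\<xi>\<bar> powr \<gamma> * chi_gt1 chi \<xi>)\<bar>"
    unfolding P_def using x0 by (simp add: abs_mult)
  finally show ?thesis .
qed

lemma cs_int':
  fixes a :: "real \<Rightarrow> 'b::{banach, second_countable_topology}"
  assumes ac: "continuous_on UNIV a" and supp: "\<And>\<xi>. L < \<bar>\<xi>\<bar> \<Longrightarrow> a \<xi> = 0"
  shows "integrable lborel a"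
proof -
  have "integrable lborel (\<lambda>x. indicator {-L..L} x *\<^sub>R a x)"
    by (rule borel_integrable_compact) (auto intro: continuous_on_subset[OF ac])
  moreover have "(\<lambda>x. indicator {-L..L} x *\<^sub>R a x) = a"
  proof
    fix x show "indicator {-L..L} x *\<^sub>R a x = a x"
      using supp[of x] by (cases "\<bar>x\<bar> \<le> L") (auto simp: indicator_def abs_le_iff)
  qed
  ultimately show ?thesis by simp
qed

lemma enn_powr_ennreal: "0 \<le> y \<Longrightarrow> enn_powr (ennreal y) p = ennreal (y powr p)"
  unfolding enn_powr_def by simp

lemma enn_powr_mono:
  assumes "X \<le> ennreal Y" "0 \<le> Y" "0 \<le> p"
  shows "enn_powr X p \<le> ennreal (Y powr p)"
proof -
  have "X \<noteq> \<infinity>"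
  proof
    assume "X = \<infinity>"
    then have "\<infinity> \<le> ennreal Y" using assms(1) by simp
    then show False by (simp add: top_unique)
  qed
  then obtain x where x: "X = ennreal x" "0 \<le> x" by (cases X) auto
  have "x \<le> Y" using assms(1,2) x by simp
  then show ?thesis unfolding x enn_powr_ennreal[OF x(2)] using x(2) assms(3)
    by (intro ennreal_leI powr_mono2) auto
qed

lemma L1_L2:
  fixes a :: "real \<Rightarrow> complex"
  assumes ac: "continuous_on UNIV a" and supp: "\<And>\<xi>. R < \<bar>\<xi>\<bar> \<Longrightarrow> a \<xi> = 0" and R: "0 < R"
  shows "(\<integral>\<xi>. cmod (a \<xi>) \<partial>lborel) \<le> sqrt (2 * R * (\<integral>\<xi>. (cmod (a \<xi>))\<^sup>2 \<partial>lborel))"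
proof -
  define A2 where "A2 = (\<integral>\<xi>. (cmod (a \<xi>))\<^sup>2 \<partial>lborel)"
  have A20: "0 \<le> A2" unfolding A2_def by simp
  have i1: "integrable lborel (\<lambda>\<xi>. cmod (a \<xi>))"
    by (rule cs_int'[of _ R]) (use supp in \<open>auto intro!: continuous_intros ac\<close>)
  have i2: "integrable lborel (\<lambda>\<xi>. (cmod (a \<xi>))\<^sup>2)"
    by (rule cs_int'[of _ R]) (use supp in \<open>auto intro!: continuous_intros ac\<close>)
  have i3: "integrable lborel (indicator {-R..R} :: real \<Rightarrow> real)"
    by (simp add: integrable_indicator_iff emeasure_lborel_Icc_eq)
  have gen: "(\<integral>\<xi>. cmod (a \<xi>) \<partial>lborel) \<le> (A2 / l + l * (2 * R)) / 2" if l: "0 < l" for l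
  proof -
    have "(\<integral>\<xi>. cmod (a \<xi>) \<partial>lborel) \<le> (\<integral>\<xi>. ((cmod (a \<xi>))\<^sup>2 / l + l * indicator {-R..R} \<xi>) / 2 \<partial>lborel)"
    proof (rule integral_mono[OF i1])
      show "integrable lborel (\<lambda>\<xi>. ((cmod (a \<xi>))\<^sup>2 / l + l * indicator {-R..R} \<xi>) / 2)"
        using i2 i3 by (intro integrable_divide Bochner_Integration.integrable_add integrable_mult_right) auto
      fix \<xi>
      show "cmod (a \<xi>) \<le> ((cmod (a \<xi>))\<^sup>2 / l + l * indicator {-R..R} \<xi>) / 2"
      proof (cases "\<bar>\<xi>\<bar> \<le> R")
        case True
        then have "\<xi> \<in> {-R..R}" by auto
        moreover have "2 * l * cmod (a \<xi>) \<le> (cmod (a \<xi>))\<^sup>2 + l\<^sup>2"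
          using sum_squares_bound[of "cmod (a \<xi>)" l] by (simp add: power2_diff algebra_simps)
        ultimately show ?thesis using l by (simp add: field_simps power2_eq_square)
      next
        case False then show ?thesis using supp[of \<xi>] l by (simp add: indicator_def)
      qed
    qed
    also have "\<dots> = (A2 / l + l * (2 * R)) / 2"
      unfolding A2_def using i2 i3 R
      by (simp add: Bochner_Integration.integral_add integrable_mult_right)
    finally show ?thesis .
  qed
  show ?thesis
  proof (cases "A2 = 0")
    case True
    have "(\<integral>\<xi>. cmod (a \<xi>) \<partial>lborel) \<le> 0 + e" if e: "0 < e" for e
    proof -
      have "(\<integral>\<xi>. cmod (a \<xi>) \<partial>lborel) \<le> (A2 / (e / R) + (e / R) * (2 * R)) / 2" using gen[of "e/R"] e R by simp
      also have "\<dots> = e" using True R by simp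
      finally show ?thesis by simp
    qed
    then have "(\<integral>\<xi>. cmod (a \<xi>) \<partial>lborel) \<le> 0" by (rule field_le_epsilon)
    then show ?thesis using True unfolding A2_def by simp
  next
    case False
    then have A2p: "0 < A2" using A20 by simp
    define l where "l = sqrt (A2 / (2 * R))"
    have l: "0 < l" unfolding l_def using A2p R by simp
    have l2: "l\<^sup>2 = A2 / (2 * R)" unfolding l_def using A20 R by simp
    have h1: "A2 / l = (2 * R) * l" using l l2 R by (simp add: field_simps power2_eq_square)
    have h2: "(2 * R) * l = sqrt (2 * R * A2)" unfolding l_def using R A20
      by (simp add: real_sqrt_divide real_sqrt_mult field_simps)
    have "A2 / l = sqrt (2 * R * A2)" using h1 h2 by simp
    moreover have "l * (2 * R) = sqrt (2 * R * A2)" using h2 by (simp add: mult.commute)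
    ultimately show ?thesis using gen[OF l] unfolding A2_def by simp
  qed
qed

lemma Lpn2_exact:
  assumes G0: "\<forall>x. 0 \<le> G x" and I: "(\<integral>\<^sup>+x. ennreal ((G x)\<^sup>2) \<partial>lborel) = ennreal V" and V: "0 \<le> V"
  shows "Lpn lborel 2 (\<lambda>x. ennreal (G x)) = ennreal (sqrt V)"
proof -
  have "(\<lambda>x. enn_powr (ennreal (G x)) 2) = (\<lambda>x. ennreal ((G x)\<^sup>2))"
    using G0 by (auto simp: enn_powr_ennreal)
  then show ?thesis unfolding Lpn_def using I V by (simp add: enn_powr_ennreal powr_half_sqrt)
qed

lemma Lpn_bound:
  fixes G :: "real \<Rightarrow> real" and r :: ereal and A :: real and j :: int
  assumes Gm: "G \<in> borel_measurable lborel" and G0: "\<forall>x. 0 \<le> G x"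
    and GW: "\<forall>x. G x \<le> 2 * 2 powr (real_of_int j / 2) * sqrt A"
    and I: "(\<integral>\<^sup>+x. ennreal ((G x)\<^sup>2) \<partial>lborel) \<le> ennreal A" and A: "0 \<le> A" and r: "2 \<le> r"
  shows "Lpn lborel r (\<lambda>x. ennreal (G x)) \<le> ennreal (2 * 2 powr (real_of_int j * gamma_qr q r) * sqrt A)"
proof -
  define W where "W = 2 * 2 powr (real_of_int j / 2) * sqrt A"
  have W0: "0 \<le> W" unfolding W_def using A by simp
  show ?thesis
  proof (cases "r = \<infinity>")
    case True
    have "Inf {c. AE x in lborel. ennreal (G x) \<le> c} \<le> ennreal W"
      by (rule Inf_lower) (use GW in \<open>auto simp: W_def intro!: AE_I2 ennreal_leI\<close>)
    moreover have "W = 2 * 2 powr (real_of_int j * gamma_qr q r) * sqrt A"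
      unfolding W_def gamma_qr_def using True by simp
    ultimately show ?thesis unfolding Lpn_def using True by simp
  next
    case False
    then obtain \<rho> where \<rho>: "r = ereal \<rho>" using r by (cases r) auto
    have \<rho>2: "2 \<le> \<rho>" using r \<rho> by simp
    have gam: "gamma_qr q r = 1/2 - 1/\<rho>" unfolding gamma_qr_def using \<rho> by simp
    have L: "Lpn lborel r (\<lambda>x. ennreal (G x)) = enn_powr (\<integral>\<^sup>+x. ennreal (G x powr \<rho>) \<partial>lborel) (1/\<rho>)"
      unfolding Lpn_def using \<rho> G0 by (simp add: enn_powr_ennreal)
    show ?thesis
    proof (cases "\<rho> = 2")
      case True
      have "(\<lambda>x. ennreal (G x powr \<rho>)) = (\<lambda>x. ennreal ((G x)\<^sup>2))" using G0 True by auto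
      then have "Lpn lborel r (\<lambda>x. ennreal (G x)) \<le> ennreal (A powr (1/2))"
        unfolding L using True by (simp add: enn_powr_mono[OF I A])
      also have "\<dots> \<le> ennreal (2 * 2 powr (real_of_int j * gamma_qr q r) * sqrt A)"
        using A True gam by (simp add: powr_half_sqrt)
      finally show ?thesis .
    next
      case False
      then have \<rho>2': "2 < \<rho>" using \<rho>2 by simp
      have pw: "ennreal (G x powr \<rho>) \<le> ennreal (W powr (\<rho> - 2)) * ennreal ((G x)\<^sup>2)" for x
      proof -
        have "G x powr \<rho> = G x powr (\<rho> - 2) * G x powr 2" by (simp add: powr_add[symmetric])
        also have "\<dots> \<le> W powr (\<rho> - 2) * (G x)\<^sup>2"
          using G0 GW \<rho>2' by (auto simp: W_def intro!: mult_right_mono powr_mono2)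
        finally show ?thesis using W0 by (simp add: ennreal_mult'[symmetric])
      qed
      have "(\<integral>\<^sup>+x. ennreal (G x powr \<rho>) \<partial>lborel) \<le> (\<integral>\<^sup>+x. ennreal (W powr (\<rho> - 2)) * ennreal ((G x)\<^sup>2) \<partial>lborel)"
        by (intro nn_integral_mono pw)
      also have "\<dots> = ennreal (W powr (\<rho> - 2)) * (\<integral>\<^sup>+x. ennreal ((G x)\<^sup>2) \<partial>lborel)"
        by (rule nn_integral_cmult) (use Gm in measurable)
      also have "\<dots> \<le> ennreal (W powr (\<rho> - 2)) * ennreal A" by (intro mult_left_mono I) simp
      also have "\<dots> = ennreal (W powr (\<rho> - 2) * A)" by (simp add: ennreal_mult'[symmetric])
      finally have "Lpn lborel r (\<lambda>x. ennreal (G x)) \<le> ennreal ((W powr (\<rho> - 2) * A) powr (1/\<rho>))"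
        unfolding L using \<rho>2 A by (intro enn_powr_mono) auto
      also have "(W powr (\<rho> - 2) * A) powr (1/\<rho>) \<le> 2 * 2 powr (real_of_int j * gamma_qr q r) * sqrt A"
      proof -
        define e where "e = (\<rho> - 2) / \<rho>"
        have e: "0 \<le> e" "e \<le> 1" unfolding e_def using \<rho>2 by auto
        have "(W powr (\<rho> - 2) * A) powr (1/\<rho>) = W powr e * A powr (1/\<rho>)"
          unfolding e_def by (simp add: powr_mult powr_powr)
        also have "W powr e = 2 powr e * 2 powr (real_of_int j * (e/2)) * A powr (e/2)"
          unfolding W_def using A by (simp add: powr_mult powr_powr powr_half_sqrt[symmetric])
        also have "e/2 = gamma_qr q r" unfolding gam e_def using \<rho>2 by (simp add: field_simps)
        also have "2 powr e * 2 powr (real_of_int j * gamma_qr q r) * A powr (gamma_qr q r) * A powr (1/\<rho>)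
             = 2 powr e * 2 powr (real_of_int j * gamma_qr q r) * A powr (1/2)"
        proof -
          have "A powr (gamma_qr q r) * A powr (1/\<rho>) = A powr (1/2)" unfolding gam by (simp add: powr_add[symmetric])
          then show ?thesis by (simp add: mult.assoc)
        qed
        also have "\<dots> \<le> 2 * 2 powr (real_of_int j * gamma_qr q r) * A powr (1/2)"
        proof -
          have "2 powr e \<le> (2::real) powr 1" using e by (intro powr_mono) auto
          then show ?thesis by (intro mult_right_mono) auto
        qed
        finally show ?thesis using A by (simp add: powr_half_sqrt)
      qed
      then have "ennreal ((W powr (\<rho> - 2) * A) powr (1/\<rho>)) \<le> ennreal (2 * 2 powr (real_of_int j * gamma_qr q r) * sqrt A)"
        by (rule ennreal_leI)
      finally show ?thesis .
    qed
  qed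
qed

lemma mult_app_eq:
  "mult_app m f x = (1 / (2 * pi)) * (\<integral>\<xi>. (complex_of_real (m \<xi>) * fourier f \<xi>) * eix x \<xi> \<partial>lborel)"
  unfolding mult_app_def eix_def by simp

lemma a_cont:
  assumes fint: "integrable lborel f" and cm: "continuous_on UNIV m"
  shows "continuous_on UNIV (\<lambda>\<xi>. complex_of_real (m \<xi>) * fourier f \<xi>)"
  using fourier_cont[OF fint] cm by (intro continuous_intros) auto

lemma mult_app_meas[measurable]:
  assumes fint: "integrable lborel f" and cm: "continuous_on UNIV m"
  shows "(\<lambda>x. cmod (mult_app m f x)) \<in> borel_measurable lborel"
proof -
  have [measurable]: "(\<lambda>\<xi>. complex_of_real (m \<xi>) * fourier f \<xi>) \<in> borel_measurable borel"
    using a_cont[OF fint cm] by (rule borel_measurable_continuous_onI)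
  show ?thesis unfolding mult_app_eq by measurable
qed

lemma block_L2:
  assumes fint: "integrable lborel f" and cm: "continuous_on UNIV m" and supp: "\<forall>\<xi>. R < \<bar>\<xi>\<bar> \<longrightarrow> m \<xi> = 0"
  shows "(\<integral>\<^sup>+x. ennreal ((cmod (mult_app m f x))\<^sup>2) \<partial>lborel)
       = ennreal ((\<integral>\<xi>. (cmod (complex_of_real (m \<xi>) * fourier f \<xi>))\<^sup>2 \<partial>lborel) / (2*pi))"
proof -
  define a where "a \<xi> = complex_of_real (m \<xi>) * fourier f \<xi>" for \<xi>
  have ac: "continuous_on UNIV a" unfolding a_def[abs_def] by (rule a_cont[OF fint cm])
  have as: "\<And>\<xi>. R < \<bar>\<xi>\<bar> \<Longrightarrow> a \<xi> = 0" unfolding a_def using supp by auto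
  have am[measurable]: "a \<in> borel_measurable borel" using ac by (rule borel_measurable_continuous_onI)
  define A2 where "A2 = (\<integral>\<xi>. (cmod (a \<xi>))\<^sup>2 \<partial>lborel)"
  have P: "(\<integral>\<^sup>+x. ennreal ((cmod (\<integral>\<xi>. a \<xi> * eix x \<xi> \<partial>lborel))\<^sup>2) \<partial>lborel) = ennreal (2*pi*A2)"
    unfolding A2_def by (rule plancherel[OF ac as])
  have e: "(cmod (mult_app m f x))\<^sup>2 = (1 / (4*pi\<^sup>2)) * (cmod (\<integral>\<xi>. a \<xi> * eix x \<xi> \<partial>lborel))\<^sup>2" for x
    unfolding mult_app_eq a_def[symmetric] by (simp add: norm_mult norm_divide power2_eq_square)
  have "(\<integral>\<^sup>+x. ennreal ((cmod (mult_app m f x))\<^sup>2) \<partial>lborel)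
      = (\<integral>\<^sup>+x. ennreal (1 / (4*pi\<^sup>2)) * ennreal ((cmod (\<integral>\<xi>. a \<xi> * eix x \<xi> \<partial>lborel))\<^sup>2) \<partial>lborel)"
    unfolding e by (intro nn_integral_cong) (simp add: ennreal_mult[symmetric])
  also have "\<dots> = ennreal (1 / (4*pi\<^sup>2)) * (\<integral>\<^sup>+x. ennreal ((cmod (\<integral>\<xi>. a \<xi> * eix x \<xi> \<partial>lborel))\<^sup>2) \<partial>lborel)"
    by (rule nn_integral_cmult) measurable
  also have "\<dots> = ennreal (1 / (4*pi\<^sup>2) * (2*pi*A2))"
  proof -
    have A20: "0 \<le> A2" unfolding A2_def by simp
    then show ?thesis unfolding P by (intro ennreal_mult[symmetric]) auto
  qed
  also have "\<dots> = ennreal (A2 / (2*pi))" by (simp add: power2_eq_square field_simps)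
  finally show ?thesis unfolding A2_def a_def .
qed

lemma block_Linf:
  assumes fint: "integrable lborel f" and cm: "continuous_on UNIV m" and supp: "\<forall>\<xi>. R < \<bar>\<xi>\<bar> \<longrightarrow> m \<xi> = 0" and R: "0 < R"
  shows "cmod (mult_app m f x) \<le> sqrt (2 * R * (\<integral>\<xi>. (cmod (complex_of_real (m \<xi>) * fourier f \<xi>))\<^sup>2 \<partial>lborel)) / (2*pi)"
proof -
  define a where "a \<xi> = complex_of_real (m \<xi>) * fourier f \<xi>" for \<xi>
  have ac: "continuous_on UNIV a" unfolding a_def[abs_def] by (rule a_cont[OF fint cm])
  have as: "\<And>\<xi>. R < \<bar>\<xi>\<bar> \<Longrightarrow> a \<xi> = 0" unfolding a_def using supp by auto
  have aint: "integrable lborel a" by (rule cs_int'[OF ac as])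
  have "cmod (mult_app m f x) = cmod (\<integral>\<xi>. a \<xi> * eix x \<xi> \<partial>lborel) / (2*pi)"
    unfolding mult_app_eq a_def[symmetric] by (simp add: norm_mult norm_divide)
  also have "\<dots> \<le> (\<integral>\<xi>. cmod (a \<xi>) \<partial>lborel) / (2*pi)"
    using g_bound[OF aint] by (intro divide_right_mono) auto
  also have "\<dots> \<le> sqrt (2 * R * (\<integral>\<xi>. (cmod (a \<xi>))\<^sup>2 \<partial>lborel)) / (2*pi)"
    using L1_L2[OF ac as R] by (intro divide_right_mono) auto
  finally show ?thesis unfolding a_def .
qed

lemma block:
  fixes m1 m2 :: "real \<Rightarrow> real" and j :: int and r q :: ereal
  assumes fint: "integrable lborel f"
    and c1: "continuous_on UNIV m1" and c2: "continuous_on UNIV m2"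
    and s1: "\<forall>\<xi>. 2 powr (real_of_int j + 1) < \<bar>\<xi>\<bar> \<longrightarrow> m1 \<xi> = 0"
    and s2: "\<forall>\<xi>. R2 < \<bar>\<xi>\<bar> \<longrightarrow> m2 \<xi> = 0"
    and r: "2 \<le> r" and K: "0 \<le> K"
    and pw: "\<forall>\<xi>. \<bar>m1 \<xi>\<bar> \<le> K * 2 powr (- real_of_int j * gamma_qr q r) * \<bar>m2 \<xi>\<bar>"
  shows "Lpn lborel r (\<lambda>x. ennreal (cmod (mult_app m1 f x)))
         \<le> ennreal (2 * K * sqrt (2*pi)) * Lpn lborel 2 (\<lambda>x. ennreal (cmod (mult_app m2 f x)))"
proof -
  define R where "R = 2 powr (real_of_int j + 1)"
  have R: "0 < R" unfolding R_def by simp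
  define c where "c = 2 powr (- real_of_int j * gamma_qr q r)"
  have c0: "0 < c" unfolding c_def by simp
  define A1 where "A1 = (\<integral>\<xi>. (cmod (complex_of_real (m1 \<xi>) * fourier f \<xi>))\<^sup>2 \<partial>lborel)"
  define B where "B = (\<integral>\<xi>. (cmod (complex_of_real (m2 \<xi>) * fourier f \<xi>))\<^sup>2 \<partial>lborel)"
  have A10: "0 \<le> A1" unfolding A1_def by simp
  have B0: "0 \<le> B" unfolding B_def by simp
  have s1': "\<forall>\<xi>. R < \<bar>\<xi>\<bar> \<longrightarrow> m1 \<xi> = 0" using s1 unfolding R_def .
  have GW: "\<forall>x. cmod (mult_app m1 f x) \<le> 2 * 2 powr (real_of_int j / 2) * sqrt A1"
  proof
    fix x
    have "cmod (mult_app m1 f x) \<le> sqrt (2 * R * A1) / (2*pi)"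
      unfolding A1_def by (rule block_Linf[OF fint c1 s1' R])
    also have "\<dots> \<le> sqrt (2 * R * A1)"
    proof -
      have "1 \<le> 2 * pi" using pi_gt3 by simp
      moreover have "0 \<le> sqrt (2 * R * A1)" using R A10 by simp
      ultimately have "sqrt (2 * R * A1) / (2*pi) \<le> sqrt (2 * R * A1) / 1"
        by (intro divide_left_mono) auto
      then show ?thesis by simp
    qed
    also have "\<dots> = sqrt (2 * R) * sqrt A1" by (simp add: real_sqrt_mult)
    also have "sqrt (2 * R) = 2 * 2 powr (real_of_int j / 2)"
    proof -
      have "2 * R = 2 powr (real_of_int j + 2)" unfolding R_def by (simp add: powr_add)
      also have "\<dots> = 2 powr ((real_of_int j + 2) / 2) * 2 powr ((real_of_int j + 2) / 2)"
        by (simp add: powr_add[symmetric])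
      finally have "sqrt (2 * R) = 2 powr ((real_of_int j + 2) / 2)" by simp
      also have "\<dots> = 2 * 2 powr (real_of_int j / 2)" by (simp add: add_divide_distrib powr_add)
      finally show ?thesis .
    qed
    finally show "cmod (mult_app m1 f x) \<le> 2 * 2 powr (real_of_int j / 2) * sqrt A1" .
  qed
  have I: "(\<integral>\<^sup>+x. ennreal ((cmod (mult_app m1 f x))\<^sup>2) \<partial>lborel) \<le> ennreal A1"
  proof -
    have "(\<integral>\<^sup>+x. ennreal ((cmod (mult_app m1 f x))\<^sup>2) \<partial>lborel) = ennreal (A1 / (2*pi))"
      unfolding A1_def by (rule block_L2[OF fint c1 s1'])
    also have "\<dots> \<le> ennreal A1"
    proof (intro ennreal_leI)
      have "A1 / (2*pi) \<le> A1 / 1" using A10 pi_gt3 by (intro divide_left_mono) auto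
      then show "A1 / (2*pi) \<le> A1" by simp
    qed
    finally show ?thesis .
  qed
  have LB: "Lpn lborel r (\<lambda>x. ennreal (cmod (mult_app m1 f x))) \<le> ennreal (2 * 2 powr (real_of_int j * gamma_qr q r) * sqrt A1)"
    by (rule Lpn_bound[OF mult_app_meas[OF fint c1] _ GW I A10 r]) simp
  have AB: "A1 \<le> (K * c)\<^sup>2 * B"
  proof -
    have a1c: "continuous_on UNIV (\<lambda>\<xi>. (cmod (complex_of_real (m1 \<xi>) * fourier f \<xi>))\<^sup>2)"
      by (auto intro!: continuous_intros c1 fourier_cont[OF fint])
    have a2c: "continuous_on UNIV (\<lambda>\<xi>. (cmod (complex_of_real (m2 \<xi>) * fourier f \<xi>))\<^sup>2)"
      by (auto intro!: continuous_intros c2 fourier_cont[OF fint])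
    have i1: "integrable lborel (\<lambda>\<xi>. (cmod (complex_of_real (m1 \<xi>) * fourier f \<xi>))\<^sup>2)"
      by (rule cs_int'[OF a1c, of R]) (use s1' in auto)
    have i2: "integrable lborel (\<lambda>\<xi>. (cmod (complex_of_real (m2 \<xi>) * fourier f \<xi>))\<^sup>2)"
      by (rule cs_int'[OF a2c, of R2]) (use s2 in auto)
    have "A1 \<le> (\<integral>\<xi>. (K * c)\<^sup>2 * (cmod (complex_of_real (m2 \<xi>) * fourier f \<xi>))\<^sup>2 \<partial>lborel)"
      unfolding A1_def
    proof (rule integral_mono[OF i1])
      show "integrable lborel (\<lambda>\<xi>. (K * c)\<^sup>2 * (cmod (complex_of_real (m2 \<xi>) * fourier f \<xi>))\<^sup>2)"
        using i2 by (rule integrable_mult_right)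
      fix \<xi>
      have "\<bar>m1 \<xi>\<bar> * cmod (fourier f \<xi>) \<le> (K * c * \<bar>m2 \<xi>\<bar>) * cmod (fourier f \<xi>)"
        using pw unfolding c_def by (intro mult_right_mono) auto
      then have "(\<bar>m1 \<xi>\<bar> * cmod (fourier f \<xi>))\<^sup>2 \<le> (K * c * \<bar>m2 \<xi>\<bar> * cmod (fourier f \<xi>))\<^sup>2"
        by (intro power_mono) auto
      then show "(cmod (complex_of_real (m1 \<xi>) * fourier f \<xi>))\<^sup>2 \<le> (K * c)\<^sup>2 * (cmod (complex_of_real (m2 \<xi>) * fourier f \<xi>))\<^sup>2"
        by (simp add: norm_mult power_mult_distrib)
    qed
    also have "\<dots> = (K * c)\<^sup>2 * B" unfolding B_def by simp
    finally show ?thesis .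
  qed
  have sA: "sqrt A1 \<le> K * c * sqrt B"
  proof -
    have "sqrt A1 \<le> sqrt ((K * c)\<^sup>2 * B)" using AB by (rule real_sqrt_le_mono)
    also have "\<dots> = K * c * sqrt B" using K c0 by (simp add: real_sqrt_mult)
    finally show ?thesis .
  qed
  have "2 * 2 powr (real_of_int j * gamma_qr q r) * sqrt A1 \<le> 2 * 2 powr (real_of_int j * gamma_qr q r) * (K * c * sqrt B)"
    using sA by (intro mult_left_mono) auto
  also have "\<dots> = 2 * K * sqrt B * (2 powr (real_of_int j * gamma_qr q r) * c)" by (simp add: ac_simps)
  also have "2 powr (real_of_int j * gamma_qr q r) * c = 1" unfolding c_def by (simp add: powr_add[symmetric])
  also have "2 * K * sqrt B * 1 = (2 * K * sqrt (2*pi)) * sqrt (B / (2*pi))"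
    using B0 by (simp add: real_sqrt_divide)
  finally have num: "2 * 2 powr (real_of_int j * gamma_qr q r) * sqrt A1 \<le> (2 * K * sqrt (2*pi)) * sqrt (B / (2*pi))" .
  have L2: "Lpn lborel 2 (\<lambda>x. ennreal (cmod (mult_app m2 f x))) = ennreal (sqrt (B / (2*pi)))"
    by (rule Lpn2_exact) (use block_L2[OF fint c2 s2] B0 in \<open>auto simp: B_def\<close>)
  have "Lpn lborel r (\<lambda>x. ennreal (cmod (mult_app m1 f x))) \<le> ennreal ((2 * K * sqrt (2*pi)) * sqrt (B / (2*pi)))"
    using LB num by (meson ennreal_leI order_trans)
  also have "\<dots> = ennreal (2 * K * sqrt (2*pi)) * Lpn lborel 2 (\<lambda>x. ennreal (cmod (mult_app m2 f x)))"
    unfolding L2 using K B0 by (intro ennreal_mult) auto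
  finally show ?thesis .
qed

lemma enn_powr_mono2:
  assumes "X \<le> Y" "0 \<le> p"
  shows "enn_powr X p \<le> enn_powr Y p"
proof (cases "Y = \<infinity>")
  case True then show ?thesis by (simp add: enn_powr_def)
next
  case False
  then obtain y where y: "Y = ennreal y" "0 \<le> y" by (cases Y) auto
  show ?thesis unfolding y enn_powr_ennreal[OF y(2)] using assms(1) y assms(2) by (intro enn_powr_mono) auto
qed

lemma enn_powr_scale:
  assumes c: "0 < c"
  shows "enn_powr (ennreal (c\<^sup>2) * X) (1/2) = ennreal c * enn_powr X (1/2)"
proof (cases "X = \<infinity>")
  case True
  then show ?thesis using c by (simp add: enn_powr_def ennreal_mult_top)
next
  case False
  then obtain x where x: "X = ennreal x" "0 \<le> x" by (cases X) auto
  have e1: "ennreal (c\<^sup>2) * X = ennreal (c\<^sup>2 * x)" unfolding x using x by (simp add: ennreal_mult)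
  have e2: "(c\<^sup>2 * x) powr (1/2) = c * x powr (1/2)"
    using c x by (simp add: powr_mult powr_half_sqrt)
  have "enn_powr (ennreal (c\<^sup>2) * X) (1/2) = enn_powr (ennreal (c\<^sup>2 * x)) (1/2)" unfolding e1 ..
  also have "\<dots> = ennreal ((c\<^sup>2 * x) powr (1/2))" using x c by (intro enn_powr_ennreal) simp
  also have "\<dots> = ennreal (c * x powr (1/2))" unfolding e2 ..
  also have "\<dots> = ennreal c * ennreal (x powr (1/2))" using c by (intro ennreal_mult) auto
  also have "\<dots> = ennreal c * enn_powr X (1/2)" unfolding x(1) enn_powr_ennreal[OF x(2)] ..
  finally show ?thesis .
qed

lemma besov_bound:
  assumes c: "0 < c"
    and blk: "\<forall>j. Lpn lborel r (\<lambda>x. ennreal (norm (mult_app (\<lambda>\<xi>. psi chi j \<xi> * m1 \<xi>) f x)))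
               \<le> ennreal c * Lpn lborel 2 (\<lambda>x. ennreal (norm (mult_app (\<lambda>\<xi>. psi chi j \<xi> * m2 \<xi>) f x)))"
  shows "besov chi s r m1 f \<le> ennreal c * besov chi s 2 m2 f"
proof -
  let ?L1 = "\<lambda>j. Lpn lborel r (\<lambda>x. ennreal (norm (mult_app (\<lambda>\<xi>. psi chi j \<xi> * m1 \<xi>) f x)))"
  let ?L2 = "\<lambda>j. Lpn lborel 2 (\<lambda>x. ennreal (norm (mult_app (\<lambda>\<xi>. psi chi j \<xi> * m2 \<xi>) f x)))"
  have pw: "(ennreal (2 powr (real_of_int j * s)) * ?L1 j)\<^sup>2 \<le> ennreal (c\<^sup>2) * (ennreal (2 powr (real_of_int j * s)) * ?L2 j)\<^sup>2" for j
  proof -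
    have "ennreal (2 powr (real_of_int j * s)) * ?L1 j \<le> ennreal (2 powr (real_of_int j * s)) * (ennreal c * ?L2 j)"
      using blk by (intro mult_left_mono) auto
    then have "(ennreal (2 powr (real_of_int j * s)) * ?L1 j)\<^sup>2 \<le> (ennreal (2 powr (real_of_int j * s)) * (ennreal c * ?L2 j))\<^sup>2"
      by (intro power_mono) auto
    also have "\<dots> = ennreal (c\<^sup>2) * (ennreal (2 powr (real_of_int j * s)) * ?L2 j)\<^sup>2"
      using c by (simp add: power_mult_distrib ennreal_power mult_ac)
    finally show ?thesis .
  qed
  have "(\<integral>\<^sup>+ j. (ennreal (2 powr (real_of_int j * s)) * ?L1 j)\<^sup>2 \<partial>count_space UNIV)
      \<le> (\<integral>\<^sup>+ j. ennreal (c\<^sup>2) * (ennreal (2 powr (real_of_int j * s)) * ?L2 j)\<^sup>2 \<partial>count_space UNIV)"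
    by (intro nn_integral_mono pw)
  also have "\<dots> = ennreal (c\<^sup>2) * (\<integral>\<^sup>+ j. (ennreal (2 powr (real_of_int j * s)) * ?L2 j)\<^sup>2 \<partial>count_space UNIV)"
    by (rule nn_integral_cmult) simp
  finally have "besov chi s r m1 f \<le> enn_powr (ennreal (c\<^sup>2) * (\<integral>\<^sup>+ j. (ennreal (2 powr (real_of_int j * s)) * ?L2 j)\<^sup>2 \<partial>count_space UNIV)) (1/2)"
    unfolding besov_def by (rule enn_powr_mono2) simp
  also have "\<dots> = ennreal c * besov chi s 2 m2 f"
    unfolding besov_def by (rule enn_powr_scale[OF c])
  finally show ?thesis .
qed

lemma exp_integral_le1:
  "(\<integral>\<^sup>+t. ennreal (exp (- t)) * indicator {0..} t \<partial>lborel) \<le> 1"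
proof -
  interpret prob_space "density lborel (exponential_density 1)"
    by (rule prob_space_exponential_density) simp
  have "emeasure (density lborel (exponential_density 1)) UNIV = 1"
    using emeasure_space_1 by simp
  then have e: "(\<integral>\<^sup>+t. ennreal (exponential_density 1 t) \<partial>lborel) = 1"
    by (subst (asm) emeasure_density) auto
  have "(\<integral>\<^sup>+t. ennreal (exp (- t)) * indicator {0..} t \<partial>lborel) = (\<integral>\<^sup>+t. ennreal (exponential_density 1 t) \<partial>lborel)"
    by (intro nn_integral_cong) (auto simp: exponential_density_def indicator_def)
  then show ?thesis using e by simp
qed

lemma LqB_bound:
  fixes F :: "real \<Rightarrow> ennreal" and q :: ereal and T :: ereal
  assumes c0: "0 < c0" and q: "2 \<le> q"
    and FB: "\<forall>t. 0 \<le> t \<longrightarrow> F t \<le> ennreal (c0 * exp (- t / 2)) * B"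
  shows "Lpn (restrict_space lborel {t. 0 \<le> t \<and> ereal t < T}) q F \<le> ennreal c0 * B"
proof (cases "B = \<infinity>")
  case True then show ?thesis using c0 by (simp add: ennreal_mult_top)
next
  case False
  then obtain b where b: "B = ennreal b" "0 \<le> b" by (cases B) auto
  let ?M = "restrict_space lborel {t. 0 \<le> t \<and> ereal t < T}"
  have sp: "space ?M = {t. 0 \<le> t \<and> ereal t < T}" by (simp add: space_restrict_space)
  have Fb: "F t \<le> ennreal (c0 * b * exp (- t / 2))" if "0 \<le> t" for t
    using FB that b c0 by (simp add: ennreal_mult[symmetric] mult_ac)
  have cb: "0 \<le> c0 * b" using c0 b by simp
  show ?thesis
  proof (cases "q = \<infinity>")
    case True
    have "Inf {c. AE x in ?M. F x \<le> c} \<le> ennreal (c0 * b)"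
    proof (rule Inf_lower, safe, intro AE_I2)
      fix t assume "t \<in> space ?M"
      then have t: "0 \<le> t" unfolding sp by simp
      have "F t \<le> ennreal (c0 * b * exp (- t / 2))" by (rule Fb[OF t])
      also have "\<dots> \<le> ennreal (c0 * b)" using cb t by (intro ennreal_leI mult_left_le) auto
      finally show "F t \<le> ennreal (c0 * b)" .
    qed
    then show ?thesis unfolding Lpn_def b using True c0 b by (simp add: ennreal_mult)
  next
    case False
    then obtain \<rho> where \<rho>: "q = ereal \<rho>" using q by (cases q) auto
    have \<rho>2: "2 \<le> \<rho>" using q \<rho> by simp
    define K where "K = (c0 * b) powr \<rho>"
    have K0: "0 \<le> K" unfolding K_def by simp
    have pw: "enn_powr (F t) \<rho> \<le> ennreal K * (ennreal (exp (- t)) * indicator {0..} t)" if "t \<in> space ?M" for t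
    proof -
      have t: "0 \<le> t" using that unfolding sp by simp
      have A: "enn_powr (F t) \<rho> \<le> ennreal ((c0 * b * exp (- t / 2)) powr \<rho>)"
        using Fb[OF t] cb \<rho>2 by (intro enn_powr_mono) auto
      have "(c0 * b * exp (- t / 2)) powr \<rho> = K * exp (- t / 2 * \<rho>)"
      proof -
        have "exp (- t / 2) powr \<rho> = exp (- t / 2 * \<rho>)" by (simp add: powr_def)
        then show ?thesis unfolding K_def by (simp add: powr_mult)
      qed
      also have "\<dots> \<le> K * exp (- t)"
        using K0 t \<rho>2 by (intro mult_left_mono) (auto simp: mult_left_mono)
      finally have B: "(c0 * b * exp (- t / 2)) powr \<rho> \<le> K * exp (- t)" .
      have "enn_powr (F t) \<rho> \<le> ennreal (K * exp (- t))"
        using A ennreal_leI[OF B] by (rule order_trans)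
      then show ?thesis using t K0 by (simp add: ennreal_mult indicator_def)
    qed
    have "(\<integral>\<^sup>+t. enn_powr (F t) \<rho> \<partial>?M) \<le> (\<integral>\<^sup>+t. ennreal K * (ennreal (exp (- t)) * indicator {0..} t) \<partial>?M)"
      by (intro nn_integral_mono pw)
    also have "\<dots> \<le> (\<integral>\<^sup>+t. ennreal K * (ennreal (exp (- t)) * indicator {0..} t) \<partial>lborel)"
    proof -
      have m: "{t. 0 \<le> t \<and> ereal t < T} \<inter> space lborel \<in> sets lborel" by measurable
      show ?thesis unfolding nn_integral_restrict_space[OF m]
        by (intro nn_integral_mono) (auto simp: indicator_def)
    qed
    also have "\<dots> = ennreal K * (\<integral>\<^sup>+t. ennreal (exp (- t)) * indicator {0..} t \<partial>lborel)"
      by (rule nn_integral_cmult) measurable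
    also have "\<dots> \<le> ennreal K * 1" by (intro mult_left_mono exp_integral_le1) simp
    finally have "(\<integral>\<^sup>+t. enn_powr (F t) \<rho> \<partial>?M) \<le> ennreal K" by simp
    then have "Lpn ?M q F \<le> ennreal (K powr (1/\<rho>))"
      unfolding Lpn_def using \<rho> \<rho>2 K0 by (simp add: enn_powr_mono)
    also have "K powr (1/\<rho>) = c0 * b" unfolding K_def using cb \<rho>2 by (simp add: powr_powr)
    finally show ?thesis unfolding b using c0 b by (simp add: ennreal_mult)
  qed
qed

theorem lemmaA3:
  fixes chi :: "real \<Rightarrow> real" and s :: real and q r :: ereal
  assumes chi_smooth: "\<forall>n x. ((deriv ^^ n) chi) differentiable (at x)"
    and chi_even: "\<forall>\<xi>. chi (- \<xi>) = chi \<xi>"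
    and chi_one: "\<forall>\<xi>. \<bar>\<xi>\<bar> \<le> 1 \<longrightarrow> chi \<xi> = 1"
    and chi_zero: "\<forall>\<xi>. \<bar>\<xi>\<bar> \<ge> 2 \<longrightarrow> chi \<xi> = 0"
    and q: "2 \<le> q" and r: "2 \<le> r"
  shows "\<exists>C>0. \<forall>(T::ereal) (f::real \<Rightarrow> complex). 0 < T \<longrightarrow> integrable lborel f \<longrightarrow>
           LqB chi T q s r (\<lambda>t \<xi>. D1sym t \<xi> * chi_gt1 chi \<xi>) f
             \<le> ennreal C * besov chi s 2 (\<lambda>\<xi>. \<bar>\<xi>\<bar> powr (gamma_qr q r - 1) * chi_gt1 chi \<xi>) f
         \<and> LqB chi T q s r (\<lambda>t \<xi>. dtD1sym t \<xi> * chi_gt1 chi \<xi>) f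
             \<le> ennreal C * besov chi s 2 (\<lambda>\<xi>. \<bar>\<xi>\<bar> powr (gamma_qr q r) * chi_gt1 chi \<xi>) f"
proof -
  have chi_cont: "continuous_on UNIV chi"
  proof (rule continuous_at_imp_continuous_on, intro ballI)
    fix x :: real
    have "chi differentiable (at x)" using chi_smooth[rule_format, of 0 x] by simp
    then show "isCont chi x" by (rule differentiable_imp_continuous_within)
  qed
  have cg_cont: "continuous_on UNIV (chi_gt1 chi)"
    unfolding chi_gt1_def[abs_def] using chi_cont by (intro continuous_intros)
  have cg0: "\<forall>\<xi>. \<bar>\<xi>\<bar> \<le> 1 \<longrightarrow> chi_gt1 chi \<xi> = 0" using chi_one unfolding chi_gt1_def by simp
  have pc: "continuous_on UNIV (psi chi j)" for j by (rule psi_cont[OF chi_cont])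
  have g0: "0 \<le> gamma_qr q r" and g1: "gamma_qr q r \<le> 1/2"
  proof -
    have "0 \<le> gamma_qr q r \<and> gamma_qr q r \<le> 1/2"
    proof (cases "r = \<infinity>")
      case True then show ?thesis unfolding gamma_qr_def by simp
    next
      case False
      then obtain \<rho> where \<rho>: "r = ereal \<rho>" using r by (cases r) auto
      have "2 \<le> \<rho>" using r \<rho> by simp
      then have "1 / \<rho> \<le> 1/2" "0 \<le> 1 / \<rho>" by (auto simp: divide_le_eq)
      then show ?thesis unfolding gamma_qr_def using \<rho> by simp
    qed
    then show "0 \<le> gamma_qr q r" "gamma_qr q r \<le> 1/2" by auto
  qed
  have supp: "\<forall>\<xi>. 2 powr (real_of_int j + 1) < \<bar>\<xi>\<bar> \<longrightarrow> psi chi j \<xi> * h \<xi> = 0" for j and h :: "real \<Rightarrow> real"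
    using psi_hi[OF chi_zero] by (auto intro: less_imp_le)
  define C where "C = 6 * sqrt (2*pi)"
  have C0: "0 < C" unfolding C_def by simp
  have Ce: "2 * (3 * exp (- t / 2)) * sqrt (2*pi) = C * exp (- t / 2)" for t unfolding C_def by simp
  show ?thesis
  proof (intro exI[of _ C] conjI allI impI C0)
    fix T :: ereal and f :: "real \<Rightarrow> complex"
    assume T: "0 < T" and fint: "integrable lborel f"
    show "LqB chi T q s r (\<lambda>t \<xi>. D1sym t \<xi> * chi_gt1 chi \<xi>) f
             \<le> ennreal C * besov chi s 2 (\<lambda>\<xi>. \<bar>\<xi>\<bar> powr (gamma_qr q r - 1) * chi_gt1 chi \<xi>) f"
      unfolding LqB_def
    proof (rule LqB_bound[OF C0 q], intro allI impI)
      fix t :: real assume t: "0 \<le> t"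
      show "besov chi s r (\<lambda>\<xi>. D1sym t \<xi> * chi_gt1 chi \<xi>) f \<le> ennreal (C * exp (- t / 2)) * besov chi s 2 (\<lambda>\<xi>. \<bar>\<xi>\<bar> powr (gamma_qr q r - 1) * chi_gt1 chi \<xi>) f"
      proof (rule besov_bound[OF _ allI])
        show "0 < C * exp (- t / 2)" using C0 by simp
        fix j :: int
        have "Lpn lborel r (\<lambda>x. ennreal (cmod (mult_app (\<lambda>\<xi>. psi chi j \<xi> * (D1sym t \<xi> * chi_gt1 chi \<xi>)) f x)))
           \<le> ennreal (2 * (3 * exp (- t / 2)) * sqrt (2*pi)) * Lpn lborel 2 (\<lambda>x. ennreal (cmod (mult_app (\<lambda>\<xi>. psi chi j \<xi> * (\<bar>\<xi>\<bar> powr (gamma_qr q r - 1) * chi_gt1 chi \<xi>)) f x)))"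
        proof (rule block[OF fint _ _ supp supp r])
          show "continuous_on UNIV (\<lambda>\<xi>. psi chi j \<xi> * (D1sym t \<xi> * chi_gt1 chi \<xi>))"
            by (rule glue_cont[OF pc cg_cont cg0 D1_cont])
          show "continuous_on UNIV (\<lambda>\<xi>. psi chi j \<xi> * (\<bar>\<xi>\<bar> powr (gamma_qr q r - 1) * chi_gt1 chi \<xi>))"
            by (rule glue_cont[OF pc cg_cont cg0 powr_cont])
          show "0 \<le> 3 * exp (- t / 2)" by simp
          show "\<forall>\<xi>. \<bar>psi chi j \<xi> * (D1sym t \<xi> * chi_gt1 chi \<xi>)\<bar>
              \<le> 3 * exp (- t / 2) * 2 powr (- real_of_int j * gamma_qr q r) * \<bar>psi chi j \<xi> * (\<bar>\<xi>\<bar> powr (gamma_qr q r - 1) * chi_gt1 chi \<xi>)\<bar>"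
            using cmp_D1[OF chi_one g0 g1] by blast
        qed
        then show "Lpn lborel r (\<lambda>x. ennreal (norm (mult_app (\<lambda>\<xi>. psi chi j \<xi> * (D1sym t \<xi> * chi_gt1 chi \<xi>)) f x)))
           \<le> ennreal (C * exp (- t / 2)) * Lpn lborel 2 (\<lambda>x. ennreal (norm (mult_app (\<lambda>\<xi>. psi chi j \<xi> * (\<bar>\<xi>\<bar> powr (gamma_qr q r - 1) * chi_gt1 chi \<xi>)) f x)))"
          unfolding Ce .
      qed
    qed
    show "LqB chi T q s r (\<lambda>t \<xi>. dtD1sym t \<xi> * chi_gt1 chi \<xi>) f
             \<le> ennreal C * besov chi s 2 (\<lambda>\<xi>. \<bar>\<xi>\<bar> powr (gamma_qr q r) * chi_gt1 chi \<xi>) f"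
      unfolding LqB_def
    proof (rule LqB_bound[OF C0 q], intro allI impI)
      fix t :: real assume t: "0 \<le> t"
      show "besov chi s r (\<lambda>\<xi>. dtD1sym t \<xi> * chi_gt1 chi \<xi>) f \<le> ennreal (C * exp (- t / 2)) * besov chi s 2 (\<lambda>\<xi>. \<bar>\<xi>\<bar> powr (gamma_qr q r) * chi_gt1 chi \<xi>) f"
      proof (rule besov_bound[OF _ allI])
        show "0 < C * exp (- t / 2)" using C0 by simp
        fix j :: int
        have "Lpn lborel r (\<lambda>x. ennreal (cmod (mult_app (\<lambda>\<xi>. psi chi j \<xi> * (dtD1sym t \<xi> * chi_gt1 chi \<xi>)) f x)))
           \<le> ennreal (2 * (3 * exp (- t / 2)) * sqrt (2*pi)) * Lpn lborel 2 (\<lambda>x. ennreal (cmod (mult_app (\<lambda>\<xi>. psi chi j \<xi> * (\<bar>\<xi>\<bar> powr (gamma_qr q r) * chi_gt1 chi \<xi>)) f x)))"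
        proof (rule block[OF fint _ _ supp supp r])
          show "continuous_on UNIV (\<lambda>\<xi>. psi chi j \<xi> * (dtD1sym t \<xi> * chi_gt1 chi \<xi>))"
            by (rule glue_cont[OF pc cg_cont cg0 dtD1_cont])
          show "continuous_on UNIV (\<lambda>\<xi>. psi chi j \<xi> * (\<bar>\<xi>\<bar> powr (gamma_qr q r) * chi_gt1 chi \<xi>))"
            by (rule glue_cont[OF pc cg_cont cg0 powr_cont])
          show "0 \<le> 3 * exp (- t / 2)" by simp
          show "\<forall>\<xi>. \<bar>psi chi j \<xi> * (dtD1sym t \<xi> * chi_gt1 chi \<xi>)\<bar>
              \<le> 3 * exp (- t / 2) * 2 powr (- real_of_int j * gamma_qr q r) * \<bar>psi chi j \<xi> * (\<bar>\<xi>\<bar> powr (gamma_qr q r) * chi_gt1 chi \<xi>)\<bar>"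
            using cmp_dt[OF chi_one g0 g1] by blast
        qed
        then show "Lpn lborel r (\<lambda>x. ennreal (norm (mult_app (\<lambda>\<xi>. psi chi j \<xi> * (dtD1sym t \<xi> * chi_gt1 chi \<xi>)) f x)))
           \<le> ennreal (C * exp (- t / 2)) * Lpn lborel 2 (\<lambda>x. ennreal (norm (mult_app (\<lambda>\<xi>. psi chi j \<xi> * (\<bar>\<xi>\<bar> powr (gamma_qr q r) * chi_gt1 chi \<xi>)) f x)))"
          unfolding Ce .
      qed
    qed
  qed
qed

end
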